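(* For all $e,f\in\mathrm{Exp}$, if $e\sim f$ then $e\mathrel{\dot\equiv}f$.
   Context: Fix a finite set $T$ of primitive tests, a set $\mathrm{Act}$ of atomic actions, a set $\mathrm{Out}$ of return values, and a semiring $(S,+,\cdot,0,1)$ that is positive ($x+y=0\Rightarrow x=y=0$), refinement (whenever $x+y=z+w$ there exist $s,t,u,v$ with $s+t=x$, $s+u=z$, $u+v=y$, $t+v=w$) and Conway (with ${}^*:S\to S$ satisfying $(a+b)^*=a^*(ba^* )^*$, $(ab)^*=1+a(ba)^*b$). Tests: $b,c\in\mathrm{BExp}::=\mathtt{0}\mid\mathtt{1}\mid t\ (t\in T)\mid\bar b\mid b+c\mid bc$ ($\mathtt 0,\mathtt 1$ false/true, distinct from semiring $0,1$); $\equiv_{BA}$ is Boolean equivalence; $\mathrm{At}$ is the finite set of atoms of the free Boolean algebra on $T$, atoms also regarded as tests; $\alpha\le b$ means $\alpha$ entails $b$. Expressions: $e,f\in\mathrm{Exp}::= p\in\mathrm{Act}\mid b\in\mathrm{BExp}\mid e+_b f\mid e;f\mid e^{(b)}\mid v\in\mathrm{Out}\mid e\oplus_{r,s} f\ (r,s\in S)$; $\odot r:=\mathtt 1\oplus_{r,0}\mathtt 0$. $\mathcal M_\omega(X)$: finitely supported maps $X\to S$, pointwise operations; $\delta_x$ indicator of $x$; $\nu[A]=\sum_{x\in A}\nu(x)$. A wGKAT automaton is $(X,\beta)$ with $\beta:X\to\mathcal M_\omega(\{\mathsf{acc},\mathsf{rej}\}+\mathrm{Out}+\mathrm{Act}\times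 X)^{\mathrm{At}}$. A map $h:X\to Y$ between automata $(X,\beta),(Y,\gamma)$ is a homomorphism if for all $x,\alpha$: $\gamma(h(x))_\alpha(o)=\beta(x)_\alpha(o)$ for $o\in\{\mathsf{acc},\mathsf{rej}\}+\mathrm{Out}$, and $\gamma(h(x))_\alpha(p,y)=\beta(x)_\alpha[\{p\}\times h^{-1}(y)]$. A relation $R\subseteq X\times Y$ is a bisimulation if there is $\rho:R\to\mathcal M_\omega(\{\mathsf{acc},\mathsf{rej}\}+\mathrm{Out}+\mathrm{Act}\times R)^{\mathrm{At}}$ making both projections homomorphisms from $(R,\rho)$; $e\sim f$ means some bisimulation on $(\mathrm{Exp},\partial)$ contains $(e,f)$. The derivative automaton: $\partial(b)_\alpha=\delta_{\mathsf{acc}}$ if $\alpha\le b$, else $\delta_{\mathsf{rej}}$; $\partial(v)_\alpha=\delta_v$; $\partial(p)_\alpha=\delta_{(p,\mathtt 1)}$; $\partial(e+_bf)_\alpha=\partial(e)_\alpha$ if $\alpha\le b$, else $\partial(f)_\alpha$; $\partial(e\oplus_{r,s}f)_\alpha=r\partial(e)_\alpha+s\partial(f)_\alpha$; $\partial(e;f)_\alpha=\sum_x\partial(e)_\alpha(x)c_{\alpha,f}(x)$ with $c_{\alpha,f}(\mathsf{acc})=\partial(f)_\alpha$, $c_{\alpha,f}(x)=\delta_x$ for $x\in\{\mathsf{rej}\}\cup\mathrm{Out}$, $c_{\alpha,f}(p,e')=\delta_{(p,e';f)}$; $\partial(e^{(b)})_\alpha(x)$ is $1$ if $x=\mathsf{acc}$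 and $\alpha\le\bar b$; $\partial(e)_\alpha(\mathsf{acc})^*\partial(e)_\alpha(x)$ if $x\in\{\mathsf{rej}\}\cup\mathrm{Out}$ and $\alpha\le b$; $\partial(e)_\alpha(\mathsf{acc})^*\partial(e)_\alpha(p,e')$ if $x=(p,e';e^{(b)})$ and $\alpha\le b$; $0$ otherwise. $E:\mathrm{Exp}\to S^{\mathrm{At}}$: $E(p)_\alpha=E(v)_\alpha=0$; $E(b)_\alpha=1$ if $\alpha\le b$ else $0$; $E(e\oplus_{r,s}f)_\alpha=rE(e)_\alpha+sE(f)_\alpha$; $E(e+_bf)_\alpha=E(e)_\alpha$ if $\alpha\le b$ else $E(f)_\alpha$; $E(e;f)_\alpha=E(e)_\alpha E(f)_\alpha$; $E(e^{(b)})_\alpha=E(\bar b)_\alpha$. The relation $\equiv$ is the smallest congruence on $\mathrm{Exp}$ (tests taken up to $\equiv_{BA}$; sequencing binds tighter than $\oplus$, $\odot$ binds tightest) containing, for all $e,f,g\in\mathrm{Exp}$, tests $b,c$, $v\in\mathrm{Out}$, $r,s,t,u\in S$: (G1) $e+_be\equiv e$; (G2) $e+_bf\equiv b;e+_bf$; (G3) $e+_bf\equiv f+_{\bar b}e$; (G4) $(e+_bf)+_cg\equiv e+_{bc}(f+_cg)$; (D1) $e\oplus_{r,s}(f+_bg)\equiv(e\oplus_{r,s}f)+_b(e\oplus_{r,s}g)$; (D2) $e\oplus_{r,s}(f\oplus_{t,u}g)\equiv e\oplus_{r,1}(f\oplus_{st,su}g)$; (D3) $b;(e\oplus_{r,s}f)\equiv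 b;(b;e\oplus_{r,s}b;f)$; (S1) $\mathtt 1;e\equiv e\equiv e;\mathtt 1$; (S2) $(e;f);g\equiv e;(f;g)$; (S3) $\mathtt 0;e\equiv\mathtt 0$; (S4) $(e\oplus_{r,s}f);g\equiv e;g\oplus_{r,s}f;g$; (S5) $(e+_bf);g\equiv e;g+_bf;g$; (S6) $v;e\equiv v$; (S7) $b;c\equiv bc$; (L1) $e^{(b)}\equiv e;e^{(b)}+_b\mathtt 1$; (C1) $\odot1\equiv\mathtt 1$; (C2) $\odot0;e\equiv\odot0$; (W1) $e\oplus_{r,s}e\equiv\odot(r+s);e$; (W2) $e\oplus_{r,s}f\equiv f\oplus_{s,r}e$; (W3) $e\oplus_{r,s}(f\oplus_{t,u}g)\equiv(e\oplus_{r,st}f)\oplus_{1,su}g$; (W4) $e\oplus_{ru,s}f\equiv(\odot u;e)\oplus_{r,s}f$; and closed under the rules (L2) if $e\equiv(f\oplus_{r,s}\mathtt 1)+_cg$ then $c;e^{(b)}\equiv c;((\odot(s^*r);f;e^{(b)})+_b\mathtt 1)$; (F1) if $g\equiv e;g+_bf$ and $E(e)_\alpha=0$ for all $\alpha\in\mathrm{At}$ then $g\equiv e^{(b)};f$. Systems of equations: for a finite set $X$ of indeterminates, a term over $X$ is a generalized guarded sum $\mathrm{GS}_{\alpha\in\mathrm{At}}w_\alpha$ (where $\mathrm{GS}_{\alpha\in\emptyset}:=\mathtt 0$ and $\mathrm{GS}_{\alpha\in\Phi}w_\alpha:=w_\gamma+_\gamma\mathrm{GS}_{\alpha\in\Phi\setminus\{\gamma\}}w_\alpha$)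 of weighted sums $w_\alpha=\bigoplus_{i\in I}r_i\cdot t_i$ (with $I$ finite, $\bigoplus_{i\in I}r_i\cdot t_i:=t_j\oplus_{r_j,1}\bigoplus_{i\in I\setminus\{j\}}r_i\cdot t_i$, empty sum $\odot0$), where each $t_i$ is either an expression $f\in\mathrm{Exp}$ or a formal product $g\,x$ with $g\in\mathrm{Exp}$, $x\in X$. A system is $(X,\tau)$ with $X$ finite and $\tau$ assigning a term to each $x\in X$; it is Salomaa if every $g$ occurring in a subterm $g\,x$ of any $\tau(x)$ satisfies $E(g)_\alpha=0$ for all $\alpha$. For $h:X\to\mathrm{Exp}$, $h^\#$ maps a term to the expression obtained by replacing each $g\,x$ by $g;h(x)$. For a congruence $R$, $h$ is a solution up to $R$ if $(h(x),h^\#(\tau(x)))\in R$ for all $x$. Let $\dot\equiv$ be the least congruence containing $\equiv$ and closed under the rule (UA): if $(X,\tau)$ is a Salomaa system and $f,g:X\to\mathrm{Exp}$ are both solutions of $(X,\tau)$ up to $\dot\equiv$, then $f(x)\mathrel{\dot\equiv}g(x)$ for all $x\in X$. *)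

theory Defs
  imports Main
begin

(* Semirings: semiring with 0,1 (not requiring 0 \<noteq> 1) *)
class wsemiring = semiring_0 + monoid_mult

definition positive_sr :: "'s::wsemiring itself \<Rightarrow> bool" where
  "positive_sr _ \<longleftrightarrow> (\<forall>x y::'s. x + y = 0 \<longrightarrow> x = 0 \<and> y = 0)"

definition refinement_sr :: "'s::wsemiring itself \<Rightarrow> bool" where
  "refinement_sr _ \<longleftrightarrow> (\<forall>x y z w::'s. x + y = z + w \<longrightarrow>
      (\<exists>s t u v. s + t = x \<and> s + u = z \<and> u + v = y \<and> t + v = w))"

definition conway_sr :: "('s::wsemiring \<Rightarrow> 's) \<Rightarrow> bool" where
  "conway_sr star \<longleftrightarrow> (\<forall>a b. star (a + b) = star a * star (b * star a)
                             \<and> star (a * b) = 1 + a * star (b * a) * b)"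

datatype 't bexp = BZero | BOne | BPrim 't | BNot "'t bexp" | BPlus "'t bexp" "'t bexp"
  | BAnd "'t bexp" "'t bexp"

(* Atoms of the free Boolean algebra on 't are represented as sets of primitive tests
   (the ones that are true); "alpha \<le> b" is beval alpha b *)
primrec beval :: "'t set \<Rightarrow> 't bexp \<Rightarrow> bool" where
  "beval \<alpha> BZero = False"
| "beval \<alpha> BOne = True"
| "beval \<alpha> (BPrim t) = (t \<in> \<alpha>)"
| "beval \<alpha> (BNot b) = (\<not> beval \<alpha> b)"
| "beval \<alpha> (BPlus b c) = (beval \<alpha> b \<or> beval \<alpha> c)"
| "beval \<alpha> (BAnd b c) = (beval \<alpha> b \<and> beval \<alpha> c)"

definition beq :: "'t bexp \<Rightarrow> 't bexp \<Rightarrow> bool" where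
  "beq b c \<longleftrightarrow> (\<forall>\<alpha>. beval \<alpha> b = beval \<alpha> c)"

definition atom_test :: "'t set \<Rightarrow> 't bexp" where
  "atom_test \<alpha> = (SOME b. \<forall>\<beta>. beval \<beta> b \<longleftrightarrow> \<beta> = \<alpha>)"

definition atoms_list :: "'t set list" where
  "atoms_list = (SOME xs. distinct xs \<and> set xs = UNIV)"

datatype ('t, 'p, 'v, 's) exp =
    Act 'p
  | Test "'t bexp"
  | GCh "('t, 'p, 'v, 's) exp" "'t bexp" "('t, 'p, 'v, 's) exp"
  | Seq "('t, 'p, 'v, 's) exp" "('t, 'p, 'v, 's) exp"
  | Loop "('t, 'p, 'v, 's) exp" "'t bexp"
  | Ret 'v
  | WCh "('t, 'p, 'v, 's) exp" 's 's "('t, 'p, 'v, 's) exp"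

definition odot :: "'s::wsemiring \<Rightarrow> ('t, 'p, 'v, 's) exp" where
  "odot r = WCh (Test BOne) r 0 (Test BZero)"

datatype ('p, 'v, 'x) obs = Acc | Rej | Out 'v | Tr 'p 'x

definition dlt :: "'a \<Rightarrow> 'a \<Rightarrow> 's::wsemiring" where
  "dlt a = (\<lambda>x. if x = a then 1 else 0)"

definition msum :: "('a \<Rightarrow> 's::wsemiring) \<Rightarrow> 'a set \<Rightarrow> 's" where
  "msum \<nu> A = sum \<nu> {x \<in> A. \<nu> x \<noteq> 0}"

definition fin_supp :: "('a \<Rightarrow> 's::wsemiring) \<Rightarrow> bool" where
  "fin_supp \<nu> \<longleftrightarrow> finite {x. \<nu> x \<noteq> 0}"

definition seq_cont :: "(('p,'v,('t,'p,'v,'s) exp) obs \<Rightarrow> 's::wsemiring)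
    \<Rightarrow> ('t,'p,'v,'s) exp \<Rightarrow> ('p,'v,('t,'p,'v,'s) exp) obs
    \<Rightarrow> (('p,'v,('t,'p,'v,'s) exp) obs \<Rightarrow> 's)" where
  "seq_cont df f x = (case x of Acc \<Rightarrow> df | Rej \<Rightarrow> dlt Rej | Out v \<Rightarrow> dlt (Out v)
                        | Tr p e' \<Rightarrow> dlt (Tr p (Seq e' f)))"

primrec deriv :: "('s::wsemiring \<Rightarrow> 's) \<Rightarrow> ('t, 'p, 'v, 's) exp \<Rightarrow> 't set
    \<Rightarrow> ('p, 'v, ('t, 'p, 'v, 's) exp) obs \<Rightarrow> 's" where
  "deriv star (Test b) \<alpha> = (if beval \<alpha> b then dlt Acc else dlt Rej)"
| "deriv star (Ret v) \<alpha> = dlt (Out v)"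
| "deriv star (Act p) \<alpha> = dlt (Tr p (Test BOne))"
| "deriv star (GCh e b f) \<alpha> = (if beval \<alpha> b then deriv star e \<alpha> else deriv star f \<alpha>)"
| "deriv star (WCh e r s f) \<alpha> = (\<lambda>x. r * deriv star e \<alpha> x + s * deriv star f \<alpha> x)"
| "deriv star (Seq e f) \<alpha> = (\<lambda>ob.
      \<Sum>x\<in>{x. deriv star e \<alpha> x \<noteq> 0}. deriv star e \<alpha> x * seq_cont (deriv star f \<alpha>) f x ob)"
| "deriv star (Loop e b) \<alpha> = (\<lambda>x. case x of
       Acc \<Rightarrow> (if \<not> beval \<alpha> b then 1 else 0)
     | Rej \<Rightarrow> (if beval \<alpha> b then star (deriv star e \<alpha> Acc) * deriv star e \<alpha> Rej else 0)
     | Out v \<Rightarrow> (if beval \<alpha> b then star (deriv star e \<alpha> Acc) * deriv star e \<alpha> (Out v) else 0)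
     | Tr p g \<Rightarrow> (case g of
           Seq e' k \<Rightarrow> (if beval \<alpha> b \<and> k = Loop e b
                          then star (deriv star e \<alpha> Acc) * deriv star e \<alpha> (Tr p e') else 0)
         | _ \<Rightarrow> 0))"

(* Homomorphism from an automaton with carrier X (subset of type 'x) to an automaton on all of 'y *)
definition is_hom :: "'x set \<Rightarrow> ('x \<Rightarrow> 'a \<Rightarrow> ('p,'v,'x) obs \<Rightarrow> 's::wsemiring)
    \<Rightarrow> ('y \<Rightarrow> 'a \<Rightarrow> ('p,'v,'y) obs \<Rightarrow> 's) \<Rightarrow> ('x \<Rightarrow> 'y) \<Rightarrow> bool" where
  "is_hom X \<beta> \<gamma> h \<longleftrightarrow> (\<forall>x\<in>X. \<forall>\<alpha>.
       \<gamma> (h x) \<alpha> Acc = \<beta> x \<alpha> Acc \<and> \<gamma> (h x) \<alpha> Rej = \<beta> x \<alpha> Rej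
     \<and> (\<forall>v. \<gamma> (h x) \<alpha> (Out v) = \<beta> x \<alpha> (Out v))
     \<and> (\<forall>p y. \<gamma> (h x) \<alpha> (Tr p y) = msum (\<beta> x \<alpha>) {Tr p x' | x'. x' \<in> X \<and> h x' = y}))"

definition is_bisim :: "('s::wsemiring \<Rightarrow> 's)
    \<Rightarrow> (('t, 'p, 'v, 's) exp \<times> ('t, 'p, 'v, 's) exp) set \<Rightarrow> bool" where
  "is_bisim star R \<longleftrightarrow> (\<exists>\<rho>.
      (\<forall>r\<in>R. \<forall>\<alpha>. fin_supp (\<rho> r \<alpha>) \<and> (\<forall>p r'. \<rho> r \<alpha> (Tr p r') \<noteq> 0 \<longrightarrow> r' \<in> R))
    \<and> is_hom R \<rho> (deriv star) fst \<and> is_hom R \<rho> (deriv star) snd)"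

definition bisimilar :: "('s::wsemiring \<Rightarrow> 's) \<Rightarrow> ('t, 'p, 'v, 's) exp \<Rightarrow> ('t, 'p, 'v, 's) exp \<Rightarrow> bool" where
  "bisimilar star e f \<longleftrightarrow> (\<exists>R. is_bisim star R \<and> (e, f) \<in> R)"

primrec Eo :: "('t, 'p, 'v, 's::wsemiring) exp \<Rightarrow> 't set \<Rightarrow> 's" where
  "Eo (Act p) \<alpha> = 0"
| "Eo (Ret v) \<alpha> = 0"
| "Eo (Test b) \<alpha> = (if beval \<alpha> b then 1 else 0)"
| "Eo (WCh e r s f) \<alpha> = r * Eo e \<alpha> + s * Eo f \<alpha>"
| "Eo (GCh e b f) \<alpha> = (if beval \<alpha> b then Eo e \<alpha> else Eo f \<alpha>)"
| "Eo (Seq e f) \<alpha> = Eo e \<alpha> * Eo f \<alpha>"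
| "Eo (Loop e b) \<alpha> = (if beval \<alpha> (BNot b) then 1 else 0)"

inductive eqv :: "('s::wsemiring \<Rightarrow> 's) \<Rightarrow> ('t, 'p, 'v, 's) exp \<Rightarrow> ('t, 'p, 'v, 's) exp \<Rightarrow> bool"
  for star :: "'s \<Rightarrow> 's" where
  refl: "eqv star e e"
| sym: "eqv star e f \<Longrightarrow> eqv star f e"
| trans: "eqv star e f \<Longrightarrow> eqv star f g \<Longrightarrow> eqv star e g"
| BA: "beq b c \<Longrightarrow> eqv star (Test b) (Test c)"
| cong_GCh: "eqv star e e' \<Longrightarrow> beq b b' \<Longrightarrow> eqv star f f' \<Longrightarrow> eqv star (GCh e b f) (GCh e' b' f')"
| cong_Seq: "eqv star e e' \<Longrightarrow> eqv star f f' \<Longrightarrow> eqv star (Seq e f) (Seq e' f')"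
| cong_Loop: "eqv star e e' \<Longrightarrow> beq b b' \<Longrightarrow> eqv star (Loop e b) (Loop e' b')"
| cong_WCh: "eqv star e e' \<Longrightarrow> eqv star f f' \<Longrightarrow> eqv star (WCh e r s f) (WCh e' r s f')"
| G1: "eqv star (GCh e b e) e"
| G2: "eqv star (GCh e b f) (GCh (Seq (Test b) e) b f)"
| G3: "eqv star (GCh e b f) (GCh f (BNot b) e)"
| G4: "eqv star (GCh (GCh e b f) c g) (GCh e (BAnd b c) (GCh f c g))"
| D1: "eqv star (WCh e r s (GCh f b g)) (GCh (WCh e r s f) b (WCh e r s g))"
| D2: "eqv star (WCh e r s (WCh f t u g)) (WCh e r 1 (WCh f (s * t) (s * u) g))"
| D3: "eqv star (Seq (Test b) (WCh e r s f)) (Seq (Test b) (WCh (Seq (Test b) e) r s (Seq (Test b) f)))"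
| S1a: "eqv star (Seq (Test BOne) e) e"
| S1b: "eqv star e (Seq e (Test BOne))"
| S2: "eqv star (Seq (Seq e f) g) (Seq e (Seq f g))"
| S3: "eqv star (Seq (Test BZero) e) (Test BZero)"
| S4: "eqv star (Seq (WCh e r s f) g) (WCh (Seq e g) r s (Seq f g))"
| S5: "eqv star (Seq (GCh e b f) g) (GCh (Seq e g) b (Seq f g))"
| S6: "eqv star (Seq (Ret v) e) (Ret v)"
| S7: "eqv star (Seq (Test b) (Test c)) (Test (BAnd b c))"
| L1: "eqv star (Loop e b) (GCh (Seq e (Loop e b)) b (Test BOne))"
| C1: "eqv star (odot 1) (Test BOne)"
| C2: "eqv star (Seq (odot 0) e) (odot 0)"
| W1: "eqv star (WCh e r s e) (Seq (odot (r + s)) e)"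
| W2: "eqv star (WCh e r s f) (WCh f s r e)"
| W3: "eqv star (WCh e r s (WCh f t u g)) (WCh (WCh e r (s * t) f) 1 (s * u) g)"
| W4: "eqv star (WCh e (r * u) s f) (WCh (Seq (odot u) e) r s f)"
| L2: "eqv star e (GCh (WCh f r s (Test BOne)) c g) \<Longrightarrow>
       eqv star (Seq (Test c) (Loop e b))
                (Seq (Test c) (GCh (Seq (odot (star s * r)) (Seq f (Loop e b))) b (Test BOne)))"
| F1: "eqv star g (GCh (Seq e g) b f) \<Longrightarrow> (\<forall>\<alpha>. Eo e \<alpha> = 0) \<Longrightarrow> eqv star g (Seq (Loop e b) f)"

(* Systems of equations; indeterminates are natural numbers *)
datatype ('t, 'p, 'v, 's) sumd = SExp "('t, 'p, 'v, 's) exp" | SVar "('t, 'p, 'v, 's) exp" nat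

(* a term: for each atom a weighted sum, given as a finite list of (weight, summand) *)
type_synonym ('t, 'p, 'v, 's) sterm = "'t set \<Rightarrow> ('s \<times> ('t, 'p, 'v, 's) sumd) list"

primrec sumd_inst :: "(nat \<Rightarrow> ('t, 'p, 'v, 's) exp) \<Rightarrow> ('t, 'p, 'v, 's) sumd \<Rightarrow> ('t, 'p, 'v, 's) exp" where
  "sumd_inst h (SExp f) = f"
| "sumd_inst h (SVar g x) = Seq g (h x)"

fun wsum :: "('s \<times> ('t, 'p, 'v, 's::wsemiring) exp) list \<Rightarrow> ('t, 'p, 'v, 's) exp" where
  "wsum [] = odot 0"
| "wsum ((r, t) # rest) = WCh t r 1 (wsum rest)"

primrec gsum :: "'t set list \<Rightarrow> ('t set \<Rightarrow> ('t, 'p, 'v, 's) exp) \<Rightarrow> ('t, 'p, 'v, 's) exp" where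
  "gsum [] w = Test BZero"
| "gsum (\<gamma> # \<gamma>s) w = GCh (w \<gamma>) (atom_test \<gamma>) (gsum \<gamma>s w)"

definition hsharp :: "(nat \<Rightarrow> ('t, 'p, 'v, 's::wsemiring) exp) \<Rightarrow> ('t, 'p, 'v, 's) sterm
    \<Rightarrow> ('t, 'p, 'v, 's) exp" where
  "hsharp h \<tau> = gsum atoms_list (\<lambda>\<alpha>. wsum (map (\<lambda>(r, t). (r, sumd_inst h t)) (\<tau> \<alpha>)))"

definition is_system :: "nat set \<Rightarrow> (nat \<Rightarrow> ('t, 'p, 'v, 's) sterm) \<Rightarrow> bool" where
  "is_system X \<tau> \<longleftrightarrow> finite X \<and>
     (\<forall>x\<in>X. \<forall>\<alpha> r g y. (r, SVar g y) \<in> set (\<tau> x \<alpha>) \<longrightarrow> y \<in> X)"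

definition salomaa :: "nat set \<Rightarrow> (nat \<Rightarrow> ('t, 'p, 'v, 's::wsemiring) sterm) \<Rightarrow> bool" where
  "salomaa X \<tau> \<longleftrightarrow> (\<forall>x\<in>X. \<forall>\<alpha> r g y. (r, SVar g y) \<in> set (\<tau> x \<alpha>) \<longrightarrow> (\<forall>\<beta>. Eo g \<beta> = 0))"

inductive deqv :: "('s::wsemiring \<Rightarrow> 's) \<Rightarrow> ('t, 'p, 'v, 's) exp \<Rightarrow> ('t, 'p, 'v, 's) exp \<Rightarrow> bool"
  for star :: "'s \<Rightarrow> 's" where
  base: "eqv star e f \<Longrightarrow> deqv star e f"
| refl: "deqv star e e"
| sym: "deqv star e f \<Longrightarrow> deqv star f e"
| trans: "deqv star e f \<Longrightarrow> deqv star f g \<Longrightarrow> deqv star e g"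
| cong_GCh: "deqv star e e' \<Longrightarrow> beq b b' \<Longrightarrow> deqv star f f' \<Longrightarrow> deqv star (GCh e b f) (GCh e' b' f')"
| cong_Seq: "deqv star e e' \<Longrightarrow> deqv star f f' \<Longrightarrow> deqv star (Seq e f) (Seq e' f')"
| cong_Loop: "deqv star e e' \<Longrightarrow> beq b b' \<Longrightarrow> deqv star (Loop e b) (Loop e' b')"
| cong_WCh: "deqv star e e' \<Longrightarrow> deqv star f f' \<Longrightarrow> deqv star (WCh e r s f) (WCh e' r s f')"
| UA: "is_system X \<tau> \<Longrightarrow> salomaa X \<tau> \<Longrightarrow>
       (\<forall>x. x \<in> X \<longrightarrow> deqv star (f x) (hsharp f (\<tau> x))) \<Longrightarrow>
       (\<forall>x. x \<in> X \<longrightarrow> deqv star (g x) (hsharp g (\<tau> x))) \<Longrightarrow>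
       x \<in> X \<Longrightarrow> deqv star (f x) (g x)"

end

theory Submission
  imports Defs
begin


declare eqv.trans[trans]

lemma beq_refl: "beq b b" by (simp add: beq_def)

context fixes star :: "'s::wsemiring \<Rightarrow> 's" begin

lemma cGl: "eqv star e e' \<Longrightarrow> eqv star (GCh e b f) (GCh e' b f)"
  by (rule eqv.cong_GCh, assumption, rule beq_refl, rule eqv.refl)
lemma cGr: "eqv star f f' \<Longrightarrow> eqv star (GCh e b f) (GCh e b f')"
  by (rule eqv.cong_GCh, rule eqv.refl, rule beq_refl, assumption)
lemma cGb: "beq b b' \<Longrightarrow> eqv star (GCh e b f) (GCh e b' f)"
  by (rule eqv.cong_GCh, rule eqv.refl, assumption, rule eqv.refl)
lemma cSl: "eqv star e e' \<Longrightarrow> eqv star (Seq e f) (Seq e' f)"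
  by (rule eqv.cong_Seq, assumption, rule eqv.refl)
lemma cSr: "eqv star f f' \<Longrightarrow> eqv star (Seq e f) (Seq e f')"
  by (rule eqv.cong_Seq, rule eqv.refl, assumption)
lemma cWl: "eqv star e e' \<Longrightarrow> eqv star (WCh e r s f) (WCh e' r s f)"
  by (rule eqv.cong_WCh, assumption, rule eqv.refl)
lemma cWr: "eqv star f f' \<Longrightarrow> eqv star (WCh e r s f) (WCh e r s f')"
  by (rule eqv.cong_WCh, rule eqv.refl, assumption)

lemma g_zero: "eqv star (GCh y BZero x) x"
proof -
  have "eqv star (GCh y BZero x) (GCh (Seq (Test BZero) y) BZero x)" by (rule eqv.G2)
  also have "eqv star \<dots> (GCh (Test BZero) BZero x)" by (rule cGl, rule eqv.S3)
  also have "eqv star \<dots> (GCh (Seq (Test BZero) x) BZero x)" by (rule cGl, rule eqv.sym, rule eqv.S3)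
  also have "eqv star \<dots> (GCh x BZero x)" by (rule eqv.sym, rule eqv.G2)
  also have "eqv star \<dots> x" by (rule eqv.G1)
  finally show ?thesis .
qed

lemma g_false: "beq b BZero \<Longrightarrow> eqv star (GCh x b y) y"
  by (rule eqv.trans, erule cGb, rule g_zero)

lemma g_true: "beq b BOne \<Longrightarrow> eqv star (GCh x b y) x"
proof -
  assume h: "beq b BOne"
  have "eqv star (GCh x b y) (GCh y (BNot b) x)" by (rule eqv.G3)
  also have "eqv star \<dots> x" by (rule g_false, use h in \<open>simp add: beq_def\<close>)
  finally show ?thesis .
qed

lemma g_absorb: "eqv star (GCh e c (GCh f c g)) (GCh e c g)"
proof -
  have "eqv star (GCh e c (GCh f c g)) (GCh (GCh f c g) (BNot c) e)" by (rule eqv.G3)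
  also have "eqv star \<dots> (GCh f (BAnd c (BNot c)) (GCh g (BNot c) e))" by (rule eqv.G4)
  also have "eqv star \<dots> (GCh g (BNot c) e)" by (rule g_false, simp add: beq_def)
  also have "eqv star \<dots> (GCh e (BNot (BNot c)) g)" by (rule eqv.G3)
  also have "eqv star \<dots> (GCh e c g)" by (rule cGb, simp add: beq_def)
  finally show ?thesis .
qed

lemma g_guard: "eqv star (Seq (Test b) z) (GCh z b (Test BZero))"
proof -
  have "eqv star (Seq (Test b) z) (GCh (Seq (Test b) z) b (Seq (Test b) z))" by (rule eqv.sym, rule eqv.G1)
  also have "eqv star \<dots> (GCh z b (Seq (Test b) z))" by (rule eqv.sym, rule eqv.G2)
  also have "eqv star \<dots> (GCh (Seq (Test b) z) (BNot b) z)" by (rule eqv.G3)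
  also have "eqv star \<dots> (GCh (Seq (Test (BNot b)) (Seq (Test b) z)) (BNot b) z)" by (rule eqv.G2)
  also have "eqv star \<dots> (GCh (Seq (Seq (Test (BNot b)) (Test b)) z) (BNot b) z)" by (rule cGl, rule eqv.sym, rule eqv.S2)
  also have "eqv star \<dots> (GCh (Seq (Test (BAnd (BNot b) b)) z) (BNot b) z)" by (rule cGl, rule cSl, rule eqv.S7)
  also have "eqv star \<dots> (GCh (Seq (Test BZero) z) (BNot b) z)" by (rule cGl, rule cSl, rule eqv.BA, simp add: beq_def)
  also have "eqv star \<dots> (GCh (Test BZero) (BNot b) z)" by (rule cGl, rule eqv.S3)
  also have "eqv star \<dots> (GCh z (BNot (BNot b)) (Test BZero))" by (rule eqv.G3)
  also have "eqv star \<dots> (GCh z b (Test BZero))" by (rule cGb, simp add: beq_def)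
  finally show ?thesis .
qed

lemma g_sel: "(\<forall>\<beta>. beval \<beta> b \<longrightarrow> beval \<beta> c) \<Longrightarrow> eqv star (Seq (Test b) (GCh x c y)) (Seq (Test b) x)"
proof -
  assume h: "\<forall>\<beta>. beval \<beta> b \<longrightarrow> beval \<beta> c"
  have "eqv star (Seq (Test b) (GCh x c y)) (GCh (GCh x c y) b (Test BZero))" by (rule g_guard)
  also have "eqv star \<dots> (GCh x (BAnd c b) (GCh y b (Test BZero)))" by (rule eqv.G4)
  also have "eqv star \<dots> (GCh x b (GCh y b (Test BZero)))" by (rule cGb, use h in \<open>auto simp add: beq_def\<close>)
  also have "eqv star \<dots> (GCh x b (Test BZero))" by (rule g_absorb)
  also have "eqv star \<dots> (Seq (Test b) x)" by (rule eqv.sym, rule g_guard)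
  finally show ?thesis .
qed

lemma g_selr: "(\<forall>\<beta>. beval \<beta> b \<longrightarrow> \<not> beval \<beta> c) \<Longrightarrow> eqv star (Seq (Test b) (GCh x c y)) (Seq (Test b) y)"
proof -
  assume h: "\<forall>\<beta>. beval \<beta> b \<longrightarrow> \<not> beval \<beta> c"
  have "eqv star (Seq (Test b) (GCh x c y)) (Seq (Test b) (GCh y (BNot c) x))" by (rule cSr, rule eqv.G3)
  also have "eqv star \<dots> (Seq (Test b) y)" by (rule g_sel, use h in simp)
  finally show ?thesis .
qed

lemma g_M: "beq (BAnd c' (BNot b)) (BAnd c (BNot b)) \<Longrightarrow> eqv star (GCh x b (GCh y c' z)) (GCh x b (GCh y c z))"
proof -
  assume h: "beq (BAnd c' (BNot b)) (BAnd c (BNot b))"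
  have "eqv star (GCh x b (GCh y c' z)) (GCh (GCh y c' z) (BNot b) x)" by (rule eqv.G3)
  also have "eqv star \<dots> (GCh y (BAnd c' (BNot b)) (GCh z (BNot b) x))" by (rule eqv.G4)
  also have "eqv star \<dots> (GCh y (BAnd c (BNot b)) (GCh z (BNot b) x))" by (rule cGb, rule h)
  also have "eqv star \<dots> (GCh (GCh y c z) (BNot b) x)" by (rule eqv.sym, rule eqv.G4)
  also have "eqv star \<dots> (GCh x b (GCh y c z))" by (rule eqv.sym, rule eqv.G3)
  finally show ?thesis .
qed

lemma g_or: "eqv star (GCh x (BPlus b c) z) (GCh x b (GCh x c z))"
proof -
  have "eqv star (GCh x (BPlus b c) z) (GCh (GCh x b x) (BPlus b c) z)" by (rule cGl, rule eqv.sym, rule eqv.G1)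
  also have "eqv star \<dots> (GCh x (BAnd b (BPlus b c)) (GCh x (BPlus b c) z))" by (rule eqv.G4)
  also have "eqv star \<dots> (GCh x b (GCh x (BPlus b c) z))" by (rule cGb, auto simp add: beq_def)
  also have "eqv star \<dots> (GCh x b (GCh x c z))" by (rule g_M, auto simp add: beq_def)
  finally show ?thesis .
qed

lemma gW_l: "eqv star (Seq (Test b) x) (Seq (Test b) x') \<Longrightarrow>
   eqv star (Seq (Test b) (WCh x r s y)) (Seq (Test b) (WCh x' r s y))"
proof -
  assume h: "eqv star (Seq (Test b) x) (Seq (Test b) x')"
  have "eqv star (Seq (Test b) (WCh x r s y)) (Seq (Test b) (WCh (Seq (Test b) x) r s (Seq (Test b) y)))" by (rule eqv.D3)
  also have "eqv star \<dots> (Seq (Test b) (WCh (Seq (Test b) x') r s (Seq (Test b) y)))" by (rule cSr, rule cWl, rule h)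
  also have "eqv star \<dots> (Seq (Test b) (WCh x' r s y))" by (rule eqv.sym, rule eqv.D3)
  finally show ?thesis .
qed

lemma gW_r: "eqv star (Seq (Test b) y) (Seq (Test b) y') \<Longrightarrow>
   eqv star (Seq (Test b) (WCh x r s y)) (Seq (Test b) (WCh x r s y'))"
proof -
  assume h: "eqv star (Seq (Test b) y) (Seq (Test b) y')"
  have "eqv star (Seq (Test b) (WCh x r s y)) (Seq (Test b) (WCh (Seq (Test b) x) r s (Seq (Test b) y)))" by (rule eqv.D3)
  also have "eqv star \<dots> (Seq (Test b) (WCh (Seq (Test b) x) r s (Seq (Test b) y')))" by (rule cSr, rule cWr, rule h)
  also have "eqv star \<dots> (Seq (Test b) (WCh x r s y'))" by (rule eqv.sym, rule eqv.D3)
  finally show ?thesis .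
qed

lemma gS: "eqv star (Seq (Test b) x) (Seq (Test b) x') \<Longrightarrow>
   eqv star (Seq (Test b) (Seq x y)) (Seq (Test b) (Seq x' y))"
proof -
  assume h: "eqv star (Seq (Test b) x) (Seq (Test b) x')"
  have "eqv star (Seq (Test b) (Seq x y)) (Seq (Seq (Test b) x) y)" by (rule eqv.sym, rule eqv.S2)
  also have "eqv star \<dots> (Seq (Seq (Test b) x') y)" by (rule cSl, rule h)
  also have "eqv star \<dots> (Seq (Test b) (Seq x' y))" by (rule eqv.S2)
  finally show ?thesis .
qed

lemma unguard: "eqv star (Seq (Test BOne) x) (Seq (Test BOne) y) \<Longrightarrow> eqv star x y"
  by (meson eqv.S1a eqv.sym eqv.trans)

lemma guard_eqv: "eqv star x y \<Longrightarrow> eqv star (Seq (Test b) x) (Seq (Test b) y)"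
  by (rule cSr)

end


lemma atom_test_ex: "\<exists>b. \<forall>\<beta>. beval \<beta> b \<longleftrightarrow> \<beta> = (\<alpha>::'t::finite set)"
proof -
  have key: "\<And>xs::'t list. \<exists>b. \<forall>\<beta>. beval \<beta> b \<longleftrightarrow> (\<forall>t\<in>set xs. t \<in> \<beta> \<longleftrightarrow> t \<in> \<alpha>)"
  proof -
    fix xs :: "'t list"
    show "\<exists>b. \<forall>\<beta>. beval \<beta> b \<longleftrightarrow> (\<forall>t\<in>set xs. t \<in> \<beta> \<longleftrightarrow> t \<in> \<alpha>)"
    proof (induction xs)
      case Nil then show ?case by (rule exI[of _ BOne]) simp
    next
      case (Cons a xs)
      then obtain b where b: "\<forall>\<beta>. beval \<beta> b \<longleftrightarrow> (\<forall>t\<in>set xs. t \<in> \<beta> \<longleftrightarrow> t \<in> \<alpha>)" by blast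
      show ?case
      proof (cases "a \<in> \<alpha>")
        case True
        show ?thesis by (rule exI[of _ "BAnd (BPrim a) b"], use b True in auto)
      next
        case False
        show ?thesis by (rule exI[of _ "BAnd (BNot (BPrim a)) b"], use b False in auto)
      qed
    qed
  qed
  obtain xs :: "'t list" where "set xs = UNIV"
    using finite_list[OF finite_UNIV] by blast
  then obtain b where "\<forall>\<beta>. beval \<beta> b \<longleftrightarrow> (\<forall>t\<in>set xs. t \<in> \<beta> \<longleftrightarrow> t \<in> \<alpha>)"
    using key by blast
  then show ?thesis using \<open>set xs = UNIV\<close> by (intro exI[of _ b]) auto
qed

lemma beval_atom: "beval \<beta> (atom_test (\<alpha>::'t::finite set)) \<longleftrightarrow> \<beta> = \<alpha>"
  unfolding atom_test_def by (rule someI_ex[OF atom_test_ex, rule_format])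

lemma atoms_list: "distinct (atoms_list :: 't::finite set list) \<and> set (atoms_list :: 't set list) = UNIV"
  unfolding atoms_list_def
  apply (rule someI_ex)
  using finite_distinct_list[OF finite_UNIV] by blast

primrec orl :: "'t set list \<Rightarrow> 't bexp" where
  "orl [] = BZero"
| "orl (\<gamma> # \<gamma>s) = BPlus (atom_test \<gamma>) (orl \<gamma>s)"

lemma beval_orl: "beval \<beta> (orl (\<gamma>s :: 't::finite set list)) \<longleftrightarrow> \<beta> \<in> set \<gamma>s"
  by (induction \<gamma>s) (auto simp: beval_atom)

context fixes star :: "'s::wsemiring \<Rightarrow> 's" begin

lemma gsum_const: "eqv star (gsum \<gamma>s (\<lambda>_. x)) (GCh x (orl \<gamma>s) (Test BZero))"
proof (induction \<gamma>s)
  case Nil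
  show ?case by (simp, rule eqv.sym, rule g_zero)
next
  case (Cons \<gamma> \<gamma>s)
  have "eqv star (gsum (\<gamma> # \<gamma>s) (\<lambda>_. x)) (GCh x (atom_test \<gamma>) (GCh x (orl \<gamma>s) (Test BZero)))"
    by (simp, rule cGr, rule Cons)
  also have "eqv star \<dots> (GCh x (orl (\<gamma> # \<gamma>s)) (Test BZero))" by (simp, rule eqv.sym, rule g_or)
  finally show ?case .
qed

lemma gsum_cong_guarded:
  "(\<forall>\<gamma>\<in>set \<gamma>s. eqv star (Seq (Test (atom_test \<gamma>)) (W \<gamma>)) (Seq (Test (atom_test \<gamma>)) (W' \<gamma>)))
   \<Longrightarrow> eqv star (gsum \<gamma>s W) (gsum \<gamma>s W')"
proof (induction \<gamma>s)
  case Nil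
  show ?case by (simp, rule eqv.refl)
next
  case (Cons \<gamma> \<gamma>s)
  have "eqv star (gsum (\<gamma> # \<gamma>s) W) (GCh (Seq (Test (atom_test \<gamma>)) (W \<gamma>)) (atom_test \<gamma>) (gsum \<gamma>s W))"
    by (simp, rule eqv.G2)
  also have "eqv star \<dots> (GCh (Seq (Test (atom_test \<gamma>)) (W' \<gamma>)) (atom_test \<gamma>) (gsum \<gamma>s W'))"
    using Cons by (intro eqv.cong_GCh) (auto intro: beq_refl)
  also have "eqv star \<dots> (gsum (\<gamma> # \<gamma>s) W')" by (simp, rule eqv.sym, rule eqv.G2)
  finally show ?case .
qed

lemma guard_ext:
  fixes x y :: "('t::finite, 'p, 'v, 's) exp"
  assumes "\<And>\<alpha>. eqv star (Seq (Test (atom_test \<alpha>)) x) (Seq (Test (atom_test \<alpha>)) y)"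
  shows "eqv star x y"
proof -
  have o: "beq (orl (atoms_list :: 't set list)) BOne" using atoms_list by (auto simp add: beq_def beval_orl)
  have "eqv star x (GCh x (orl (atoms_list :: 't set list)) (Test BZero))" by (rule eqv.sym, rule g_true, rule o)
  also have "eqv star \<dots> (gsum atoms_list (\<lambda>_. x))" by (rule eqv.sym, rule gsum_const)
  also have "eqv star \<dots> (gsum atoms_list (\<lambda>_. y))" by (rule gsum_cong_guarded, use assms in simp)
  also have "eqv star \<dots> (GCh y (orl (atoms_list :: 't set list)) (Test BZero))" by (rule gsum_const)
  also have "eqv star \<dots> y" by (rule g_true, rule o)
  finally show ?thesis .
qed

lemma gsum_eval:
  fixes W :: "'t::finite set \<Rightarrow> ('t, 'p, 'v, 's) exp"
  shows "\<alpha> \<in> set \<gamma>s \<Longrightarrow> eqv star (Seq (Test (atom_test \<alpha>)) (gsum \<gamma>s W)) (Seq (Test (atom_test \<alpha>)) (W \<alpha>))"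
proof (induction \<gamma>s)
  case Nil then show ?case by simp
next
  case (Cons \<gamma> \<gamma>s)
  show ?case
  proof (cases "\<gamma> = \<alpha>")
    case True
    then show ?thesis by (simp, intro g_sel, simp)
  next
    case False
    then have "\<alpha> \<in> set \<gamma>s" using Cons by simp
    have "eqv star (Seq (Test (atom_test \<alpha>)) (gsum (\<gamma> # \<gamma>s) W)) (Seq (Test (atom_test \<alpha>)) (gsum \<gamma>s W))"
      by (simp, rule g_selr, use False in \<open>auto simp: beval_atom\<close>)
    also have "eqv star \<dots> (Seq (Test (atom_test \<alpha>)) (W \<alpha>))" by (rule Cons.IH, fact)
    finally show ?thesis .
  qed
qed

lemma from_guarded:
  fixes e :: "('t::finite, 'p, 'v, 's) exp"
  assumes "\<And>\<alpha>. eqv star (Seq (Test (atom_test \<alpha>)) e) (Seq (Test (atom_test \<alpha>)) (W \<alpha>))"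
  shows "eqv star e (gsum atoms_list W)"
proof (rule guard_ext)
  fix \<alpha> :: "'t set"
  have "eqv star (Seq (Test (atom_test \<alpha>)) e) (Seq (Test (atom_test \<alpha>)) (W \<alpha>))" by (rule assms)
  also have "eqv star \<dots> (Seq (Test (atom_test \<alpha>)) (gsum atoms_list W))"
    using gsum_eval[of \<alpha> atoms_list W] atoms_list by (auto intro: eqv.sym)
  finally show "eqv star (Seq (Test (atom_test \<alpha>)) e) (Seq (Test (atom_test \<alpha>)) (gsum atoms_list W))" .
qed

end


fun wapp :: "('s::wsemiring \<times> ('t,'p,'v,'s) exp) list \<Rightarrow> ('t,'p,'v,'s) exp \<Rightarrow> ('t,'p,'v,'s) exp" where
  "wapp [] R = R"
| "wapp ((r, t) # xs) R = WCh t r 1 (wapp xs R)"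

definition scale :: "'s::wsemiring \<Rightarrow> ('s \<times> 'a) list \<Rightarrow> ('s \<times> 'a) list" where
  "scale r xs = map (\<lambda>(p, t). (r * p, t)) xs"

lemma scale_simps[simp]: "scale r [] = []" "scale r ((p,t) # xs) = (r * p, t) # scale r xs"
  "scale r (xs @ ys) = scale r xs @ scale r ys"
  by (auto simp: scale_def)

lemma wsum_wapp: "wsum xs = wapp xs (odot 0)"
  by (induction xs rule: wsum.induct) auto

lemma wapp_app: "wapp (xs @ ys) R = wapp xs (wapp ys R)"
  by (induction xs R rule: wapp.induct) auto

lemma wsum_app: "wsum (xs @ ys) = wapp xs (wsum ys)"
  by (simp add: wsum_wapp wapp_app)

context fixes star :: "'s::wsemiring \<Rightarrow> 's" begin

lemma O1: "eqv star (Seq (odot u) e) (WCh e u 0 (Test BZero))"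
proof -
  have "eqv star (Seq (odot u) e) (WCh (Seq (Test BOne) e) u 0 (Seq (Test BZero) e))"
    unfolding odot_def by (rule eqv.S4)
  also have "eqv star \<dots> (WCh e u 0 (Test BZero))"
    by (rule eqv.cong_WCh, rule eqv.S1a, rule eqv.S3)
  finally show ?thesis .
qed

lemma O2': "eqv star (WCh e r 0 g) (WCh (odot 0) 1 r e)"
proof -
  have "eqv star (WCh e r 0 g) (WCh g 0 r e)" by (rule eqv.W2)
  also have "eqv star \<dots> (WCh (Seq (odot 0) g) 1 r e)" using eqv.W4[where r=1 and u=0 and e=g and s=r and f=e] by simp
  also have "eqv star \<dots> (WCh (odot 0) 1 r e)" by (rule cWl, rule eqv.C2)
  finally show ?thesis .
qed

lemma O2: "eqv star (WCh e r 0 g) (WCh e r 0 g')"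
  by (rule eqv.trans, rule O2', rule eqv.sym, rule O2')

lemma O3: "eqv star (WCh e 1 0 g) e"
proof -
  have "eqv star (WCh e 1 0 g) (WCh e 1 0 (Test BZero))" by (rule O2)
  also have "eqv star \<dots> (Seq (odot 1) e)" by (rule eqv.sym, rule O1)
  also have "eqv star \<dots> (Seq (Test BOne) e)" by (rule cSl, rule eqv.C1)
  also have "eqv star \<dots> e" by (rule eqv.S1a)
  finally show ?thesis .
qed

lemma O5: "eqv star (WCh t 0 1 R) R"
  by (rule eqv.trans, rule eqv.W2, rule O3)

lemma O4: "eqv star (Seq (odot u) (WCh x r s y)) (WCh x (u*r) (u*s) y)"
proof -
  have "eqv star (Seq (odot u) (WCh x r s y)) (WCh (WCh x r s y) u 0 (Test BZero))" by (rule O1)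
  also have "eqv star \<dots> (WCh (Test BZero) 0 u (WCh x r s y))" by (rule eqv.W2)
  also have "eqv star \<dots> (WCh (Test BZero) 0 1 (WCh x (u*r) (u*s) y))" by (rule eqv.D2)
  also have "eqv star \<dots> (WCh x (u*r) (u*s) y)" by (rule O5)
  finally show ?thesis .
qed

lemma OZ: "eqv star (WCh (odot 0) 1 1 R) R"
proof -
  have "eqv star (WCh (odot 0) 1 1 R) (WCh R 1 1 (odot 0))" by (rule eqv.W2)
  also have "eqv star \<dots> (WCh (WCh R 1 0 (Test BOne)) 1 0 (Test BZero))"
    unfolding odot_def using eqv.W3[where e=R and r=1 and s=1 and f="Test BOne" and t=0 and u=0 and g="Test BZero"] by simp
  also have "eqv star \<dots> (WCh R 1 0 (Test BOne))" by (rule O3)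
  also have "eqv star \<dots> R" by (rule O3)
  finally show ?thesis .
qed

lemma odot_odot0: "eqv star (Seq (odot r) (odot 0)) (odot 0)"
  using O4[of r "Test BOne" 0 0 "Test BZero"] by (simp add: odot_def)

lemma OZr: "eqv star (WCh (odot 0) r 1 R) R"
proof -
  have "eqv star (WCh (odot 0) r 1 R) (WCh (Seq (odot r) (odot 0)) 1 1 R)"
    using eqv.W4[where r=1 and u=r and e="odot 0" and s=1 and f=R] by simp
  also have "eqv star \<dots> (WCh (odot 0) 1 1 R)" by (rule cWl, rule odot_odot0)
  also have "eqv star \<dots> R" by (rule OZ)
  finally show ?thesis .
qed

lemma WS: "eqv star (WCh a p r B) (WCh a p 1 (Seq (odot r) B))"
proof -
  have "eqv star (WCh a p r B) (WCh a p r (WCh B 1 0 (Test BZero)))" by (rule cWr, rule eqv.sym, rule O3)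
  also have "eqv star \<dots> (WCh a p 1 (WCh B r 0 (Test BZero)))"
    using eqv.D2[where e=a and r=p and s=r and f=B and t=1 and u=0 and g="Test BZero"] by simp
  also have "eqv star \<dots> (WCh a p 1 (Seq (odot r) B))" by (rule cWr, rule eqv.sym, rule O1)
  finally show ?thesis .
qed

lemma Swap: "eqv star (WCh a p 1 (WCh b q 1 R)) (WCh b q 1 (WCh a p 1 R))"
proof -
  have "eqv star (WCh a p 1 (WCh b q 1 R)) (WCh (WCh a p q b) 1 1 R)"
    using eqv.W3[where e=a and r=p and s=1 and f=b and t=q and u=1 and g=R] by simp
  also have "eqv star \<dots> (WCh (WCh b q p a) 1 1 R)" by (rule cWl, rule eqv.W2)
  also have "eqv star \<dots> (WCh b q 1 (WCh a p 1 R))"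
    using eqv.W3[where e=b and r=q and s=1 and f=a and t=p and u=1 and g=R] by (simp add: eqv.sym)
  finally show ?thesis .
qed

lemma Merge: "eqv star (WCh a p 1 (WCh a q 1 R)) (WCh a (p + q) 1 R)"
proof -
  have "eqv star (WCh a p 1 (WCh a q 1 R)) (WCh (WCh a p q a) 1 1 R)"
    using eqv.W3[where e=a and r=p and s=1 and f=a and t=q and u=1 and g=R] by simp
  also have "eqv star \<dots> (WCh (Seq (odot (p + q)) a) 1 1 R)" by (rule cWl, rule eqv.W1)
  also have "eqv star \<dots> (WCh a (p + q) 1 R)"
    using eqv.W4[where r=1 and u="p+q" and e=a and s=1 and f=R] by (simp add: eqv.sym)
  finally show ?thesis .
qed

lemma FlatStep: "eqv star (WCh (WCh a p 1 B) r 1 R) (WCh a (r*p) 1 (WCh B r 1 R))"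
proof -
  have "eqv star (WCh (WCh a p 1 B) r 1 R) (WCh (Seq (odot r) (WCh a p 1 B)) 1 1 R)"
    using eqv.W4[where r=1 and u=r and e="WCh a p 1 B" and s=1 and f=R] by simp
  also have "eqv star \<dots> (WCh (WCh a (r*p) r B) 1 1 R)"
    using O4[of r a p 1 B] by (simp add: cWl)
  also have "eqv star \<dots> (WCh a (r*p) 1 (WCh B r 1 R))"
    using eqv.W3[where e=a and r="r*p" and s=1 and f=B and t=r and u=1 and g=R] by (simp add: eqv.sym)
  finally show ?thesis .
qed

lemma Single: "eqv star (wsum [(1, t)]) t"
  by (simp, rule eqv.trans, rule eqv.W2, rule OZ)

lemma Flat: "eqv star (WCh (wsum ys) r 1 R) (wapp (scale r ys) R)"
proof (induction ys rule: wsum.induct)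
  case 1
  then show ?case by (simp, rule OZr)
next
  case (2 p t rest)
  have "eqv star (WCh (wsum ((p, t) # rest)) r 1 R) (WCh t (r*p) 1 (WCh (wsum rest) r 1 R))"
    by (simp, rule FlatStep)
  also have "eqv star \<dots> (wapp (scale r ((p, t) # rest)) R)" by (simp, rule cWr, rule 2)
  finally show ?case .
qed

lemma Scale: "eqv star (Seq (odot r) (wsum xs)) (wsum (scale r xs))"
proof (induction xs rule: wsum.induct)
  case 1
  then show ?case by (simp, rule odot_odot0)
next
  case (2 p t rest)
  have "eqv star (Seq (odot r) (wsum ((p, t) # rest))) (WCh t (r*p) r (wsum rest))"
    using O4[of r t p 1 "wsum rest"] by simp
  also have "eqv star \<dots> (WCh t (r*p) 1 (Seq (odot r) (wsum rest)))" by (rule WS)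
  also have "eqv star \<dots> (wsum (scale r ((p, t) # rest)))" by (simp, rule cWr, rule 2)
  finally show ?case .
qed

lemma WChW: "eqv star (WCh (wsum xs) r s (wsum ys)) (wsum (scale s ys @ scale r xs))"
proof -
  have "eqv star (WCh (wsum xs) r s (wsum ys)) (WCh (Seq (odot r) (wsum xs)) 1 s (wsum ys))"
    using eqv.W4[where r=1 and u=r and e="wsum xs" and s=s and f="wsum ys"] by simp
  also have "eqv star \<dots> (WCh (wsum (scale r xs)) 1 s (wsum ys))" by (rule cWl, rule Scale)
  also have "eqv star \<dots> (WCh (wsum ys) s 1 (wsum (scale r xs)))" by (rule eqv.W2)
  also have "eqv star \<dots> (wapp (scale s ys) (wsum (scale r xs)))" by (rule Flat)
  also have "wapp (scale s ys) (wsum (scale r xs)) = wsum (scale s ys @ scale r xs)" by (simp add: wsum_app)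
  finally show ?thesis .
qed

lemma SeqW: "eqv star (Seq (wsum xs) g) (wsum (map (\<lambda>(r, t). (r, Seq t g)) xs))"
proof (induction xs rule: wsum.induct)
  case 1
  then show ?case by (simp, rule eqv.C2)
next
  case (2 p t rest)
  have "eqv star (Seq (wsum ((p, t) # rest)) g) (WCh (Seq t g) p 1 (Seq (wsum rest) g))"
    by (simp, rule eqv.S4)
  also have "eqv star \<dots> (wsum (map (\<lambda>(r, t). (r, Seq t g)) ((p, t) # rest)))" by (simp, rule cWr, rule 2)
  finally show ?case .
qed

lemma ConcatW: "eqv star (wsum (map (\<lambda>(r, xs). (r, wsum xs)) bl)) (wsum (concat (map (\<lambda>(r, xs). scale r xs) bl)))"
proof (induction bl)
  case Nil
  then show ?case by (simp, rule eqv.refl)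
next
  case (Cons a bl)
  obtain r xs where a: "a = (r, xs)" by force
  have "eqv star (wsum (map (\<lambda>(r, xs). (r, wsum xs)) (a # bl))) (WCh (wsum xs) r 1 (wsum (concat (map (\<lambda>(r, xs). scale r xs) bl))))"
    by (simp add: a, rule cWr, rule Cons)
  also have "eqv star \<dots> (wapp (scale r xs) (wsum (concat (map (\<lambda>(r, xs). scale r xs) bl))))" by (rule Flat)
  also have "\<dots> = wsum (concat (map (\<lambda>(r, xs). scale r xs) (a # bl)))" by (simp add: a wsum_app)
  finally show ?case .
qed

lemma gmap:
  "(\<And>r x. (r, x) \<in> set L \<Longrightarrow> eqv star (Seq (Test b) (f r x)) (Seq (Test b) (g r x))) \<Longrightarrow>
   eqv star (Seq (Test b) (wsum (map (\<lambda>(r, x). (r, f r x)) L))) (Seq (Test b) (wsum (map (\<lambda>(r, x). (r, g r x)) L)))"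
proof (induction L)
  case Nil
  show ?case by (simp add: eqv.refl)
next
  case (Cons a L)
  obtain r x where a: "a = (r, x)" by force
  show ?case
    apply (simp add: a)
    apply (rule eqv.trans, rule gW_l, rule Cons.prems, simp add: a)
    apply (rule gW_r, rule Cons.IH, rule Cons.prems, simp)
    done
qed

lemma umap:
  "(\<And>r x. (r, x) \<in> set L \<Longrightarrow> eqv star (f r x) (g r x)) \<Longrightarrow>
   eqv star (wsum (map (\<lambda>(r, x). (r, f r x)) L)) (wsum (map (\<lambda>(r, x). (r, g r x)) L))"
  apply (rule unguard)
  apply (rule gmap)
  apply (rule cSr)
  by simp

end

definition wt :: "('s::wsemiring \<times> 'a) list \<Rightarrow> 'a \<Rightarrow> 's" where
  "wt xs t = sum_list (map fst (filter (\<lambda>x. snd x = t) xs))"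

lemma wt_simps[simp]: "wt [] t = 0" "wt ((p, a) # xs) t = (if a = t then p + wt xs t else wt xs t)"
  "wt (xs @ ys) t = wt xs t + wt ys t"
  by (auto simp: wt_def)

definition canon :: "'a list \<Rightarrow> ('a \<Rightarrow> 's) \<Rightarrow> ('s \<times> 'a) list" where
  "canon T w = map (\<lambda>t. (w t, t)) T"

context fixes star :: "'s::wsemiring \<Rightarrow> 's" begin

lemma Ins: "distinct T \<Longrightarrow> a \<in> set T \<Longrightarrow>
  eqv star (WCh a p 1 (wsum (canon T w))) (wsum (canon T (\<lambda>t. if t = a then p + w t else w t)))"
proof (induction T)
  case Nil then show ?case by simp
next
  case (Cons t T)
  show ?case
  proof (cases "t = a")
    case True
    then have na: "a \<notin> set T" using Cons by simp
    have e: "map (\<lambda>t. (if t = a then p + w t else w t, t)) T = map (\<lambda>t. (w t, t)) T"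
      using na by (auto intro: map_cong)
    have m: "eqv star (WCh a p 1 (wsum (canon (t # T) w))) (WCh a (p + w a) 1 (wsum (canon T w)))"
      using True by (simp add: canon_def Merge)
    have "wsum (canon (t # T) (\<lambda>t. if t = a then p + w t else w t)) = WCh a (p + w a) 1 (wsum (canon T w))"
      unfolding canon_def using True by (simp only: list.map if_True wsum.simps e) simp
    then show ?thesis using m by simp
  next
    case False
    then have "a \<in> set T" "distinct T" using Cons by auto
    have "eqv star (WCh a p 1 (wsum (canon (t # T) w))) (WCh t (w t) 1 (WCh a p 1 (wsum (canon T w))))"
      by (simp add: canon_def Swap)
    also have "eqv star \<dots> (WCh t (w t) 1 (wsum (canon T (\<lambda>t. if t = a then p + w t else w t))))"
      by (rule cWr, rule Cons.IH, fact+)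
    also have "\<dots> = wsum (canon (t # T) (\<lambda>t. if t = a then p + w t else w t))"
      using False by (simp add: canon_def)
    finally show ?thesis .
  qed
qed

lemma Zeros: "eqv star (odot 0) (wsum (canon T (\<lambda>_. 0)))"
proof (induction T)
  case Nil then show ?case by (simp add: canon_def, rule eqv.refl)
next
  case (Cons t T)
  show ?case by (simp add: canon_def, rule eqv.trans, rule Cons[unfolded canon_def], rule eqv.sym, rule O5)
qed

lemma Can: "distinct T \<Longrightarrow> set (map snd xs) \<subseteq> set T \<Longrightarrow> eqv star (wsum xs) (wsum (canon T (wt xs)))"
proof (induction xs rule: wsum.induct)
  case 1
  have "(wt [] :: 'a \<Rightarrow> 's) = (\<lambda>_. 0)" by (rule ext) simp
  then show ?case using Zeros by simp
next
  case (2 p a rest)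
  have "eqv star (wsum ((p, a) # rest)) (WCh a p 1 (wsum (canon T (wt rest))))"
    using 2 by (simp add: cWr)
  also have "eqv star \<dots> (wsum (canon T (\<lambda>t. if t = a then p + wt rest t else wt rest t)))"
    by (rule Ins, use 2 in auto)
  also have "(\<lambda>t. if t = a then p + wt rest t else wt rest t) = wt ((p, a) # rest)"
    by (rule ext) auto
  finally show ?case .
qed

lemma WF: "(\<And>t. wt xs t = wt ys t) \<Longrightarrow> eqv star (wsum xs) (wsum ys)"
proof -
  assume h: "\<And>t. wt xs t = wt ys t"
  let ?T = "remdups (map snd (xs @ ys))"
  have "eqv star (wsum xs) (wsum (canon ?T (wt xs)))" by (rule Can) auto
  also have "wt xs = wt ys" using h by (rule ext)
  also have "eqv star (wsum (canon ?T (wt ys))) (wsum ys)" by (rule eqv.sym, rule Can) auto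
  finally show ?thesis .
qed

end


definition oexp :: "('p,'v,('t,'p,'v,'s) exp) obs \<Rightarrow> ('t,'p,'v,'s) exp" where
  "oexp ob = (case ob of Acc \<Rightarrow> Test BOne | Rej \<Rightarrow> Test BZero | Out v \<Rightarrow> Ret v | Tr p e \<Rightarrow> Seq (Act p) e)"

lemma oexp_simps[simp]: "oexp Acc = Test BOne" "oexp Rej = Test BZero" "oexp (Out v) = Ret v"
  "oexp (Tr p e) = Seq (Act p) e"
  by (auto simp: oexp_def)

lemma oexp_inj: "oexp x = oexp y \<longleftrightarrow> x = y"
  by (cases x; cases y; simp)

definition lexp :: "('s \<times> ('p,'v,('t,'p,'v,'s) exp) obs) list \<Rightarrow> ('s \<times> ('t,'p,'v,'s) exp) list" where
  "lexp L = map (\<lambda>(r, ob). (r, oexp ob)) L"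

definition seqc :: "('t,'p,'v,'s) exp \<Rightarrow> ('p,'v,('t,'p,'v,'s) exp) obs \<Rightarrow> ('p,'v,('t,'p,'v,'s) exp) obs" where
  "seqc f ob = (case ob of Tr p e' \<Rightarrow> Tr p (Seq e' f) | _ \<Rightarrow> ob)"

lemma seqc_simps[simp]: "seqc f Acc = Acc" "seqc f Rej = Rej" "seqc f (Out v) = Out v"
  "seqc f (Tr p e) = Tr p (Seq e f)"
  by (auto simp: seqc_def)

definition sblk :: "('t,'p,'v,'s::wsemiring) exp \<Rightarrow> ('s \<times> ('p,'v,('t,'p,'v,'s) exp) obs) list
   \<Rightarrow> ('p,'v,('t,'p,'v,'s) exp) obs \<Rightarrow> ('s \<times> ('p,'v,('t,'p,'v,'s) exp) obs) list" where
  "sblk f Lf ob = (case ob of Acc \<Rightarrow> Lf | _ \<Rightarrow> [(1, seqc f ob)])"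

primrec dl :: "('s::wsemiring \<Rightarrow> 's) \<Rightarrow> ('t,'p,'v,'s) exp \<Rightarrow> 't set \<Rightarrow> ('s \<times> ('p,'v,('t,'p,'v,'s) exp) obs) list" where
  "dl star (Act p) \<alpha> = [(1, Tr p (Test BOne))]"
| "dl star (Test b) \<alpha> = [(1, if beval \<alpha> b then Acc else Rej)]"
| "dl star (GCh e b f) \<alpha> = (if beval \<alpha> b then dl star e \<alpha> else dl star f \<alpha>)"
| "dl star (Seq e f) \<alpha> = concat (map (\<lambda>(r, ob). scale r (sblk f (dl star f \<alpha>) ob)) (dl star e \<alpha>))"
| "dl star (Loop e b) \<alpha> = (if beval \<alpha> b then scale (star (wt (dl star e \<alpha>) Acc))
      (map (\<lambda>(r, ob). (r, seqc (Loop e b) ob)) (filter (\<lambda>x. snd x \<noteq> Acc) (dl star e \<alpha>))) else [(1, Acc)])"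
| "dl star (Ret v) \<alpha> = [(1, Out v)]"
| "dl star (WCh e r s f) \<alpha> = scale s (dl star f \<alpha>) @ scale r (dl star e \<alpha>)"

lemma wt_scale[simp]: "wt (scale r L) t = r * wt L t"
  by (induction L) (auto simp: distrib_left)

lemma wt_concat: "wt (concat Ls) t = sum_list (map (\<lambda>L. wt L t) Ls)"
  by (induction Ls) auto

lemma sum_list_group:
  fixes h :: "'a \<Rightarrow> 's::wsemiring"
  shows "finite S \<Longrightarrow> set (map snd L) \<subseteq> S \<Longrightarrow> sum_list (map (\<lambda>(r, x). r * h x) L) = (\<Sum>x\<in>S. wt L x * h x)"
proof (induction L)
  case Nil then show ?case by simp
next
  case (Cons a L)
  obtain r y where a: "a = (r, y)" by force
  have yS: "y \<in> S" using Cons.prems a by auto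
  have "(\<Sum>x\<in>S. wt (a # L) x * h x) = (\<Sum>x\<in>S. (if y = x then r * h x else 0) + wt L x * h x)"
    by (rule sum.cong) (auto simp: a distrib_right)
  also have "\<dots> = (\<Sum>x\<in>S. (if y = x then r * h x else 0)) + (\<Sum>x\<in>S. wt L x * h x)"
    by (rule sum.distrib)
  also have "(\<Sum>x\<in>S. (if y = x then r * h x else 0)) = r * h y"
    using Cons.prems(1) yS by (simp add: sum.delta)
  finally show ?case using Cons by (simp add: a)
qed

lemma wt_supp: "wt L x \<noteq> 0 \<Longrightarrow> x \<in> set (map snd L)"
  by (induction L) (auto split: if_splits)

lemma sum_list_supp:
  fixes h :: "'a \<Rightarrow> 's::wsemiring"
  shows "sum_list (map (\<lambda>(r, x). r * h x) L) = (\<Sum>x\<in>{x. wt L x \<noteq> 0}. wt L x * h x)"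
proof -
  have "sum_list (map (\<lambda>(r, x). r * h x) L) = (\<Sum>x\<in>set (map snd L). wt L x * h x)"
    by (rule sum_list_group) auto
  also have "\<dots> = (\<Sum>x\<in>{x. wt L x \<noteq> 0}. wt L x * h x)"
    by (rule sum.mono_neutral_right) (auto dest: wt_supp)
  finally show ?thesis .
qed

lemma wt_map1: "(\<And>x. \<phi> x = t \<longleftrightarrow> x = u) \<Longrightarrow> wt (map (\<lambda>(r, x). (r, \<phi> x)) L) t = wt L u"
  by (induction L) auto

lemma wt_map0: "(\<And>x. \<phi> x \<noteq> t) \<Longrightarrow> wt (map (\<lambda>(r, x). (r, \<phi> x)) L) t = 0"
  by (induction L) auto

lemma wt_filter: "wt (filter (\<lambda>x. snd x \<noteq> a) L) t = (if t = a then 0 else wt L t)"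
  by (induction L) auto

lemma dlt_eq: "dlt a b = (if b = a then 1 else 0)" by (simp add: dlt_def)

lemma sem_FT: "deriv star e \<alpha> = wt (dl star e \<alpha>)"
proof (induction e arbitrary: \<alpha>)
  case (Act p) then show ?case by (auto simp: dlt_eq)
next
  case (Test b) then show ?case by (auto simp: dlt_eq)
next
  case (GCh e1 b e2) then show ?case by auto
next
  case (Seq e1 e2)
  show ?case
  proof (rule ext)
    fix ob
    have "wt (dl star (Seq e1 e2) \<alpha>) ob = sum_list (map (\<lambda>(r, x). r * seq_cont (deriv star e2 \<alpha>) e2 x ob) (dl star e1 \<alpha>))"
      unfolding dl.simps wt_concat map_map
      by (rule arg_cong[where f=sum_list], rule map_cong, simp)
         (auto simp: sblk_def seq_cont_def Seq.IH dlt_eq split: obs.splits)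
    also have "\<dots> = (\<Sum>x\<in>{x. wt (dl star e1 \<alpha>) x \<noteq> 0}. wt (dl star e1 \<alpha>) x * seq_cont (deriv star e2 \<alpha>) e2 x ob)"
      by (rule sum_list_supp)
    finally show "deriv star (Seq e1 e2) \<alpha> ob = wt (dl star (Seq e1 e2) \<alpha>) ob"
      by (simp add: Seq.IH)
  qed
next
  case (Loop e b)
  show ?case
  proof (rule ext)
    fix ob
    show "deriv star (Loop e b) \<alpha> ob = wt (dl star (Loop e b) \<alpha>) ob"
    proof (cases "beval \<alpha> b")
      case False
      then show ?thesis by (cases ob) (auto split: exp.splits)
    next
      case True
      let ?L = "filter (\<lambda>x. snd x \<noteq> Acc) (dl star e \<alpha>)"
      let ?\<phi> = "seqc (Loop e b)"
      have r: "wt (dl star (Loop e b) \<alpha>) ob = star (wt (dl star e \<alpha>) Acc) * wt (map (\<lambda>(r, x). (r, ?\<phi> x)) ?L) ob"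
        using True by simp
      show ?thesis
      proof (cases ob)
        case Acc
        have "wt (map (\<lambda>(r, x). (r, ?\<phi> x)) ?L) ob = wt ?L Acc"
          by (rule wt_map1) (auto simp: Acc seqc_def split: obs.splits)
        then show ?thesis using r True by (simp add: Acc wt_filter)
      next
        case Rej
        have "wt (map (\<lambda>(r, x). (r, ?\<phi> x)) ?L) ob = wt ?L Rej"
          by (rule wt_map1) (auto simp: Rej seqc_def split: obs.splits)
        then show ?thesis using r True by (simp add: Rej wt_filter Loop.IH)
      next
        case (Out v)
        have "wt (map (\<lambda>(r, x). (r, ?\<phi> x)) ?L) ob = wt ?L (Out v)"
          by (rule wt_map1) (auto simp: Out seqc_def split: obs.splits)
        then show ?thesis using r True by (simp add: Out wt_filter Loop.IH)
      next
        case (Tr p g)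
        show ?thesis
        proof (cases "\<exists>e'. g = Seq e' (Loop e b)")
          case True
          then obtain e' where g: "g = Seq e' (Loop e b)" by blast
          have "wt (map (\<lambda>(r, x). (r, ?\<phi> x)) ?L) ob = wt ?L (Tr p e')"
            by (rule wt_map1) (auto simp: Tr g seqc_def split: obs.splits)
          then show ?thesis using r \<open>beval \<alpha> b\<close> by (simp add: Tr g wt_filter Loop.IH)
        next
          case False
          have "wt (map (\<lambda>(r, x). (r, ?\<phi> x)) ?L) ob = 0"
            by (rule wt_map0) (use False in \<open>auto simp: Tr seqc_def split: obs.splits\<close>)
          then show ?thesis using r \<open>beval \<alpha> b\<close> False by (auto simp: Tr split: exp.splits)
        qed
      qed
    qed
  qed
next
  case (Ret v) then show ?case by (auto simp: dlt_eq)
next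
  case (WCh e1 r s e2) then show ?case by (auto simp: add.commute)
qed



lemma lexp_simps[simp]: "lexp [] = []" "lexp ((r, x) # L) = (r, oexp x) # lexp L"
  "lexp (L @ M) = lexp L @ lexp M" "lexp (scale r L) = scale r (lexp L)"
  by (auto simp: lexp_def scale_def)

lemma lexp_concat[simp]: "lexp (concat Ls) = concat (map lexp Ls)"
  by (simp add: lexp_def[abs_def] map_concat)

context fixes star :: "'s::wsemiring \<Rightarrow> 's" begin

lemma guard_intro: "eqv star (Seq (Test c) e) (Seq (Test c) x) \<Longrightarrow> eqv star e (GCh x c e)"
proof -
  assume h: "eqv star (Seq (Test c) e) (Seq (Test c) x)"
  have "eqv star e (GCh e c e)" by (rule eqv.sym, rule eqv.G1)
  also have "eqv star \<dots> (GCh (Seq (Test c) e) c e)" by (rule eqv.G2)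
  also have "eqv star \<dots> (GCh (Seq (Test c) x) c e)" by (rule cGl, rule h)
  also have "eqv star \<dots> (GCh x c e)" by (rule eqv.sym, rule eqv.G2)
  finally show ?thesis .
qed

lemma seq_item: "x \<noteq> Acc \<Longrightarrow> eqv star (Seq (oexp x) f) (oexp (seqc f x))"
  by (cases x) (auto intro: eqv.S3 eqv.S6 eqv.S2)

lemma seq_item_w: "x \<noteq> Acc \<Longrightarrow> eqv star (Seq (oexp x) f) (wsum (lexp [(1, seqc f x)]))"
  by (rule eqv.trans, erule seq_item, rule eqv.sym, simp only: lexp_simps, rule Single)

lemma wt_lexp_split: "wt (lexp L) t = wt (lexp (filter (\<lambda>x. snd x = Acc) L)) t + wt (lexp (filter (\<lambda>x. snd x \<noteq> Acc) L)) t"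
  by (induction L) (auto simp: add.assoc add.left_commute)

lemma wt_lexp_acc: "wt (lexp (filter (\<lambda>x. snd x = Acc) L)) t = (if t = Test BOne then wt L Acc else 0)"
  by (induction L) auto

lemma syn_FT:
  fixes e :: "('t::finite,'p,'v,'s) exp"
  shows "eqv star (Seq (Test (atom_test \<alpha>)) e) (Seq (Test (atom_test \<alpha>)) (wsum (lexp (dl star e \<alpha>))))"
proof (induction e arbitrary: \<alpha>)
  case (Act p)
  show ?case
    apply (rule cSr, simp only: dl.simps lexp_simps oexp_simps)
    apply (rule eqv.trans, rule eqv.S1b, rule eqv.sym, rule Single)
    done
next
  case (Test b)
  let ?c = "if beval \<alpha> b then BOne else BZero"
  have "eqv star (Seq (Test (atom_test \<alpha>)) (Test b)) (Seq (Test (atom_test \<alpha>)) (Test ?c))"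
    apply (rule eqv.trans, rule eqv.S7, rule eqv.trans[rotated], rule eqv.sym, rule eqv.S7)
    apply (rule eqv.BA) by (auto simp: beq_def beval_atom)
  also have "eqv star \<dots> (Seq (Test (atom_test \<alpha>)) (wsum (lexp (dl star (Test b) \<alpha>))))"
    by (rule cSr, rule eqv.sym, cases "beval \<alpha> b") (simp_all only: dl.simps lexp_simps oexp_simps if_True if_False Single)
  finally show ?case .
next
  case (GCh e1 b e2)
  show ?case
  proof (cases "beval \<alpha> b")
    case True
    have "eqv star (Seq (Test (atom_test \<alpha>)) (GCh e1 b e2)) (Seq (Test (atom_test \<alpha>)) e1)"
      by (rule g_sel, use True in \<open>simp add: beval_atom\<close>)
    then show ?thesis using GCh.IH(1)[of \<alpha>] True by (auto intro: eqv.trans)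
  next
    case False
    have "eqv star (Seq (Test (atom_test \<alpha>)) (GCh e1 b e2)) (Seq (Test (atom_test \<alpha>)) e2)"
      by (rule g_selr, use False in \<open>simp add: beval_atom\<close>)
    then show ?thesis using GCh.IH(2)[of \<alpha>] False by (auto intro: eqv.trans)
  qed
next
  case (WCh e1 r s e2)
  have "eqv star (Seq (Test (atom_test \<alpha>)) (WCh e1 r s e2))
     (Seq (Test (atom_test \<alpha>)) (WCh (wsum (lexp (dl star e1 \<alpha>))) r s e2))"
    by (rule gW_l, rule WCh.IH)
  also have "eqv star \<dots> (Seq (Test (atom_test \<alpha>)) (WCh (wsum (lexp (dl star e1 \<alpha>))) r s (wsum (lexp (dl star e2 \<alpha>)))))"
    by (rule gW_r, rule WCh.IH)
  also have "eqv star \<dots> (Seq (Test (atom_test \<alpha>)) (wsum (lexp (dl star (WCh e1 r s e2) \<alpha>))))"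
    by (rule cSr, simp only: dl.simps lexp_simps, rule WChW)
  finally show ?case .
next
  case (Seq e1 e2)
  let ?A = "Test (atom_test \<alpha>)"
  let ?L1 = "dl star e1 \<alpha>" and ?L2 = "dl star e2 \<alpha>"
  have "eqv star (Seq ?A (Seq e1 e2)) (Seq ?A (Seq (wsum (lexp ?L1)) e2))"
    by (rule gS, rule Seq.IH)
  also have "eqv star \<dots> (Seq ?A (wsum (map (\<lambda>(r, t). (r, Seq t e2)) (lexp ?L1))))"
    by (rule cSr, rule SeqW)
  also have "map (\<lambda>(r, t). (r, Seq t e2)) (lexp ?L1) = map (\<lambda>(r, x). (r, Seq (oexp x) e2)) ?L1"
    by (auto simp: lexp_def)
  also have "eqv star (Seq ?A (wsum (map (\<lambda>(r, x). (r, Seq (oexp x) e2)) ?L1)))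
       (Seq ?A (wsum (map (\<lambda>(r, x). (r, wsum (lexp (sblk e2 ?L2 x)))) ?L1)))"
  proof (rule gmap)
    fix r x
    show "eqv star (Seq ?A (Seq (oexp x) e2)) (Seq ?A (wsum (lexp (sblk e2 ?L2 x))))"
    proof (cases "x = Acc")
      case True
      have "eqv star (Seq ?A (Seq (oexp x) e2)) (Seq ?A e2)" using True by (simp add: cSr eqv.S1a)
      also have "eqv star \<dots> (Seq ?A (wsum (lexp (sblk e2 ?L2 x))))" using True Seq.IH(2)[of \<alpha>] by (simp add: sblk_def)
      finally show ?thesis .
    next
      case False
      have "sblk e2 ?L2 x = [(1, seqc e2 x)]" using False by (cases x) (auto simp: sblk_def)
      then show ?thesis using seq_item_w[OF False, of e2] by (simp add: cSr)
    qed
  qed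
  also have "map (\<lambda>(r, x). (r, wsum (lexp (sblk e2 ?L2 x)))) ?L1 = map (\<lambda>(r, xs). (r, wsum xs)) (map (\<lambda>(r, x). (r, lexp (sblk e2 ?L2 x))) ?L1)"
    by auto
  also have "eqv star (Seq ?A (wsum (map (\<lambda>(r, xs). (r, wsum xs)) (map (\<lambda>(r, x). (r, lexp (sblk e2 ?L2 x))) ?L1))))
     (Seq ?A (wsum (concat (map (\<lambda>(r, xs). scale r xs) (map (\<lambda>(r, x). (r, lexp (sblk e2 ?L2 x))) ?L1)))))"
    by (rule cSr, rule ConcatW)
  also have "concat (map (\<lambda>(r, xs). scale r xs) (map (\<lambda>(r, x). (r, lexp (sblk e2 ?L2 x))) ?L1)) = lexp (dl star (Seq e1 e2) \<alpha>)"
    by (simp add: map_map comp_def case_prod_beta)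
  finally show ?case .
next
  case (Loop e b)
  let ?A = "Test (atom_test \<alpha>)"
  show ?case
  proof (cases "beval \<alpha> b")
    case False
    have "eqv star (Seq ?A (Loop e b)) (Seq ?A (GCh (Seq e (Loop e b)) b (Test BOne)))"
      by (rule cSr, rule eqv.L1)
    also have "eqv star \<dots> (Seq ?A (Test BOne))"
      by (rule g_selr, use False in \<open>simp add: beval_atom\<close>)
    also have "eqv star \<dots> (Seq ?A (wsum (lexp (dl star (Loop e b) \<alpha>))))"
      by (simp only: dl.simps False if_False lexp_simps oexp_simps, rule cSr, rule eqv.sym, rule Single)
    finally show ?thesis .
  next
    case True
    let ?Le = "dl star e \<alpha>"
    let ?a = "wt ?Le Acc"
    let ?NA = "filter (\<lambda>x. snd x \<noteq> Acc) ?Le"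
    let ?F = "wsum (lexp ?NA)"
    let ?K = "Loop e b"
    have "eqv star (wsum (lexp ?Le)) (wsum ((?a, Test BOne) # lexp ?NA))"
      by (rule WF) (subst wt_lexp_split, simp add: wt_lexp_acc)
    also have "eqv star \<dots> (WCh ?F 1 ?a (Test BOne))" by (simp, rule eqv.W2)
    finally have h1: "eqv star (wsum (lexp ?Le)) (WCh ?F 1 ?a (Test BOne))" .
    have "eqv star (Seq ?A e) (Seq ?A (WCh ?F 1 ?a (Test BOne)))"
      by (rule eqv.trans, rule Loop.IH, rule cSr, rule h1)
    then have h2: "eqv star e (GCh (WCh ?F 1 ?a (Test BOne)) (atom_test \<alpha>) e)" by (rule guard_intro)
    have "eqv star (Seq ?A ?K) (Seq ?A (GCh (Seq (odot (star ?a * 1)) (Seq ?F ?K)) b (Test BOne)))"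
      by (rule eqv.L2, rule h2)
    also have "eqv star \<dots> (Seq ?A (Seq (odot (star ?a)) (Seq ?F ?K)))"
      by (simp, rule g_sel, use True in \<open>simp add: beval_atom\<close>)
    also have "eqv star \<dots> (Seq ?A (Seq (odot (star ?a)) (wsum (map (\<lambda>(r, t). (r, Seq t ?K)) (lexp ?NA)))))"
      by (rule cSr, rule cSr, rule SeqW)
    also have "map (\<lambda>(r, t). (r, Seq t ?K)) (lexp ?NA) = map (\<lambda>(r, x). (r, Seq (oexp x) ?K)) ?NA"
      by (auto simp: lexp_def)
    also have "eqv star (Seq ?A (Seq (odot (star ?a)) (wsum (map (\<lambda>(r, x). (r, Seq (oexp x) ?K)) ?NA))))
        (Seq ?A (Seq (odot (star ?a)) (wsum (map (\<lambda>(r, x). (r, oexp (seqc ?K x))) ?NA))))"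
      by (rule cSr, rule cSr, rule umap, rule seq_item, auto)
    also have "eqv star \<dots> (Seq ?A (wsum (scale (star ?a) (map (\<lambda>(r, x). (r, oexp (seqc ?K x))) ?NA))))"
      by (rule cSr, rule Scale)
    also have "scale (star ?a) (map (\<lambda>(r, x). (r, oexp (seqc ?K x))) ?NA) = lexp (dl star (Loop e b) \<alpha>)"
      using True by (simp add: lexp_def scale_def map_map comp_def case_prod_beta)
    finally show ?thesis .
  qed
next
  case (Ret v)
  show ?case
    by (rule cSr, simp only: dl.simps lexp_simps oexp_simps, rule eqv.sym, rule Single)
qed

lemma FT:
  fixes e :: "('t::finite,'p,'v,'s) exp"
  shows "eqv star e (gsum atoms_list (\<lambda>\<alpha>. wsum (lexp (dl star e \<alpha>))))"
  by (rule from_guarded, rule syn_FT)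

end


primrec cl :: "('t,'p,'v,'s) exp \<Rightarrow> ('t,'p,'v,'s) exp set" where
  "cl (Act p) = {Act p, Test BOne}"
| "cl (Test b) = {Test b}"
| "cl (Ret v) = {Ret v}"
| "cl (GCh e b f) = insert (GCh e b f) (cl e \<union> cl f)"
| "cl (WCh e r s f) = insert (WCh e r s f) (cl e \<union> cl f)"
| "cl (Seq e f) = insert (Seq e f) ((\<lambda>z. Seq z f) ` cl e \<union> cl f)"
| "cl (Loop e b) = insert (Loop e b) ((\<lambda>z. Seq z (Loop e b)) ` cl e)"

lemma cl_self: "e \<in> cl e" by (cases e) auto

lemma cl_finite: "finite (cl e)" by (induction e) auto

lemma set_scale: "(r, t) \<in> set (scale c L) \<Longrightarrow> \<exists>r'. (r', t) \<in> set L"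
  by (auto simp: scale_def)

lemma T_Seq: "(r, Tr p y) \<in> set (dl star (Seq e f) \<alpha>) \<Longrightarrow>
   (\<exists>y' r'. y = Seq y' f \<and> (r', Tr p y') \<in> set (dl star e \<alpha>)) \<or> (\<exists>r'. (r', Tr p y) \<in> set (dl star f \<alpha>))"
proof -
  assume "(r, Tr p y) \<in> set (dl star (Seq e f) \<alpha>)"
  then obtain r0 ob where ob: "(r0, ob) \<in> set (dl star e \<alpha>)" and m: "(r, Tr p y) \<in> set (scale r0 (sblk f (dl star f \<alpha>) ob))"
    by auto
  from set_scale[OF m] obtain r' where m': "(r', Tr p y) \<in> set (sblk f (dl star f \<alpha>) ob)" by blast
  show ?thesis
  proof (cases ob)
    case Acc then show ?thesis using m' by (auto simp: sblk_def)
  next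
    case Rej then show ?thesis using m' by (auto simp: sblk_def)
  next
    case (Out v) then show ?thesis using m' by (auto simp: sblk_def)
  next
    case (Tr q y') then show ?thesis using m' ob by (auto simp: sblk_def)
  qed
qed

lemma T_Loop: "(r, Tr p y) \<in> set (dl star (Loop e b) \<alpha>) \<Longrightarrow>
   \<exists>y' r'. y = Seq y' (Loop e b) \<and> (r', Tr p y') \<in> set (dl star e \<alpha>)"
  by (auto simp: scale_def seqc_def split: if_splits obs.splits)

lemma cl_closed: "x \<in> cl e \<Longrightarrow> (r, Tr p y) \<in> set (dl star x \<alpha>) \<Longrightarrow> y \<in> cl e"
proof (induction e arbitrary: x r p y \<alpha>)
  case (Act q) then show ?case by (auto split: if_splits)
next
  case (Test b) then show ?case by (auto split: if_splits)
next
  case (Ret v) then show ?case by auto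
next
  case (GCh e1 b e2)
  then show ?case using cl_self[of e1] cl_self[of e2] by (auto split: if_splits)
next
  case (WCh e1 r1 s1 e2)
  from WCh.prems(1) consider "x = WCh e1 r1 s1 e2" | "x \<in> cl e1" | "x \<in> cl e2" by auto
  then show ?case
  proof cases
    case 1
    then have "(\<exists>r'. (r', Tr p y) \<in> set (dl star e1 \<alpha>)) \<or> (\<exists>r'. (r', Tr p y) \<in> set (dl star e2 \<alpha>))"
      using WCh.prems(2) by (auto dest: set_scale)
    then show ?thesis using WCh.IH cl_self[of e1] cl_self[of e2] by auto
  qed (use WCh in auto)
next
  case (Seq e1 e2)
  from Seq.prems(1) consider "x = Seq e1 e2" | z where "z \<in> cl e1" "x = Seq z e2" | "x \<in> cl e2" by auto
  then show ?case
  proof cases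
    case 1
    from T_Seq[OF Seq.prems(2)[unfolded 1]] show ?thesis
      using Seq.IH cl_self[of e1] cl_self[of e2] by fastforce
  next
    case 2
    from T_Seq[OF Seq.prems(2)[unfolded 2(2)]] show ?thesis
      using Seq.IH 2(1) cl_self[of e2] by fastforce
  next
    case 3 then show ?thesis using Seq.IH Seq.prems by auto
  qed
next
  case (Loop e1 b)
  have L: "(r', Tr p' y') \<in> set (dl star (Loop e1 b) \<alpha>') \<Longrightarrow> y' \<in> cl (Loop e1 b)" for r' p' y' \<alpha>'
    using T_Loop[of r' p' y' star e1 b \<alpha>'] Loop.IH cl_self[of e1] by fastforce
  from Loop.prems(1) consider "x = Loop e1 b" | z where "z \<in> cl e1" "x = Seq z (Loop e1 b)" by auto
  then show ?case
  proof cases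
    case 1 then show ?thesis using L Loop.prems(2) by auto
  next
    case 2
    from T_Seq[OF Loop.prems(2)[unfolded 2(2)]] show ?thesis
      using Loop.IH 2(1) L by fastforce
  qed
qed

lemma pos_sum:
  assumes pos: "positive_sr TYPE('s::wsemiring)" and fin: "finite A"
  shows "sum (\<nu>::'a \<Rightarrow> 's) A = 0 \<Longrightarrow> x \<in> A \<Longrightarrow> \<nu> x = 0"
  using fin
proof (induction A rule: finite_induct)
  case empty then show ?case by simp
next
  case (insert a A)
  then have "\<nu> a + sum \<nu> A = 0" by simp
  then have "\<nu> a = 0 \<and> sum \<nu> A = 0" using pos unfolding positive_sr_def by blast
  then show ?case using insert by auto
qed

lemma msum_nz: "positive_sr TYPE('s::wsemiring) \<Longrightarrow> fin_supp (\<nu>::'a \<Rightarrow> 's) \<Longrightarrow> x \<in> A \<Longrightarrow> \<nu> x \<noteq> 0 \<Longrightarrow> msum \<nu> A \<noteq> 0"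
  unfolding msum_def fin_supp_def
  using pos_sum[of "{x \<in> A. \<nu> x \<noteq> 0}" \<nu> x] by (auto elim: finite_subset[rotated])

lemma deriv_tr: "deriv star x \<alpha> (Tr p y) \<noteq> 0 \<Longrightarrow> \<exists>r. (r, Tr p y) \<in> set (dl star x \<alpha>)"
  using wt_supp[of "dl star x \<alpha>" "Tr p y"] by (auto simp: sem_FT)



definition idx :: "'a list \<Rightarrow> 'a \<Rightarrow> nat" where
  "idx xs r = (SOME i. i < length xs \<and> xs ! i = r)"

lemma idx: "r \<in> set xs \<Longrightarrow> idx xs r < length xs \<and> xs ! idx xs r = r"
  unfolding idx_def by (rule someI_ex) (simp add: in_set_conv_nth)

definition obsmap :: "('x \<Rightarrow> 'y) \<Rightarrow> ('p,'v,'x) obs \<Rightarrow> ('p,'v,'y) obs" where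
  "obsmap g ob = (case ob of Acc \<Rightarrow> Acc | Rej \<Rightarrow> Rej | Out v \<Rightarrow> Out v | Tr p x \<Rightarrow> Tr p (g x))"

lemma obsmap_simps[simp]: "obsmap g x = Acc \<longleftrightarrow> x = Acc" "obsmap g x = Rej \<longleftrightarrow> x = Rej"
  "obsmap g x = Out v \<longleftrightarrow> x = Out v" "obsmap g x = Tr p y \<longleftrightarrow> (\<exists>x'. x = Tr p x' \<and> g x' = y)"
  by (cases x; auto simp: obsmap_def)+

definition trm :: "(('t,'p,'v,'s) exp \<times> ('t,'p,'v,'s) exp) list \<Rightarrow> ('p,'v,('t,'p,'v,'s) exp \<times> ('t,'p,'v,'s) exp) obs
    \<Rightarrow> ('t,'p,'v,'s) sumd" where
  "trm xs ob = (case ob of Acc \<Rightarrow> SExp (Test BOne) | Rej \<Rightarrow> SExp (Test BZero) | Out v \<Rightarrow> SExp (Ret v)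
      | Tr p r' \<Rightarrow> SVar (Act p) (idx xs r'))"

definition sl :: "('a \<Rightarrow> 's::wsemiring) \<Rightarrow> 'a list" where
  "sl \<nu> = (SOME ys. distinct ys \<and> set ys = {x. \<nu> x \<noteq> 0})"

lemma sl: "fin_supp \<nu> \<Longrightarrow> distinct (sl \<nu>) \<and> set (sl \<nu>) = {x. \<nu> x \<noteq> 0}"
  unfolding sl_def fin_supp_def
  apply (rule someI_ex)
  using finite_distinct_list by blast

definition tau where
  "tau \<rho> xs i \<alpha> = (if i < length xs then map (\<lambda>ob. (\<rho> (xs ! i) \<alpha> ob, trm xs ob)) (sl (\<rho> (xs ! i) \<alpha>)) else [])"

lemma wt_distinct_map: "distinct ys \<Longrightarrow> wt (map (\<lambda>ob. (\<nu> ob, \<mu> ob)) ys) t = sum \<nu> {ob \<in> set ys. \<mu> ob = t}"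
proof (induction ys)
  case Nil then show ?case by simp
next
  case (Cons a ys)
  show ?case
  proof (cases "\<mu> a = t")
    case True
    have "{ob \<in> set (a # ys). \<mu> ob = t} = insert a {ob \<in> set ys. \<mu> ob = t}" using True by auto
    then show ?thesis using Cons True by simp
  next
    case False
    have "{ob \<in> set (a # ys). \<mu> ob = t} = {ob \<in> set ys. \<mu> ob = t}" using False by auto
    then show ?thesis using Cons False by simp
  qed
qed

lemma wt_lexp_eq: "(\<And>ob. wt L ob = wt L' ob) \<Longrightarrow> wt (lexp L) t = wt (lexp L') t"
proof (cases "\<exists>u. t = oexp u")
  case True
  assume h: "\<And>ob. wt L ob = wt L' ob"
  from True obtain u where u: "t = oexp u" by blast
  have "\<And>L. wt (lexp L) t = wt L u"
    unfolding lexp_def u by (rule wt_map1) (simp add: oexp_inj)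
  then show ?thesis using h by simp
next
  case False
  have "\<And>L. wt (lexp L) t = 0"
    unfolding lexp_def by (rule wt_map0) (use False in auto)
  then show ?thesis by simp
qed

lemma sum_single: "sum \<nu> {x. \<nu> x \<noteq> 0 \<and> x = a} = (\<nu> a :: 's::wsemiring)"
proof (cases "\<nu> a = 0")
  case True
  then have "{x. \<nu> x \<noteq> 0 \<and> x = a} = {}" by auto
  then show ?thesis using True by simp
next
  case False
  then have "{x. \<nu> x \<noteq> 0 \<and> x = a} = {a}" by auto
  then show ?thesis by simp
qed

lemma sum_single2: "sum \<nu> {x. x = a \<and> \<nu> x \<noteq> 0} = (\<nu> a :: 's::wsemiring)"
  using sum_single[of \<nu> a] by (simp add: conj_commute)

context fixes star :: "'s::wsemiring \<Rightarrow> 's" begin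

lemma solution:
  fixes \<pi> :: "('t::finite,'p,'v,'s) exp \<times> ('t,'p,'v,'s) exp \<Rightarrow> ('t,'p,'v,'s) exp"
  assumes hom: "is_hom R \<rho> (deriv star) \<pi>"
    and fs: "\<And>r \<alpha>. r \<in> R \<Longrightarrow> fin_supp (\<rho> r \<alpha>)"
    and inR: "\<And>r \<alpha> p r'. r \<in> R \<Longrightarrow> \<rho> r \<alpha> (Tr p r') \<noteq> 0 \<Longrightarrow> r' \<in> R"
    and clo: "\<And>r \<alpha> p r'. r \<in> set xs \<Longrightarrow> \<rho> r \<alpha> (Tr p r') \<noteq> 0 \<Longrightarrow> r' \<in> set xs"
    and sub: "set xs \<subseteq> R" and i: "i < length xs"
  shows "eqv star (\<pi> (xs ! i)) (hsharp (\<lambda>i. \<pi> (xs ! i)) (tau \<rho> xs i))"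
proof -
  let ?r = "xs ! i"
  have rxs: "?r \<in> set xs" using i by simp
  have rR: "?r \<in> R" using rxs sub by auto
  define M where "M \<alpha> = map (\<lambda>ob. (\<rho> ?r \<alpha> ob, obsmap \<pi> ob)) (sl (\<rho> ?r \<alpha>))" for \<alpha>
  have slp: "distinct (sl (\<rho> ?r \<alpha>)) \<and> set (sl (\<rho> ?r \<alpha>)) = {x. \<rho> ?r \<alpha> x \<noteq> 0}" for \<alpha>
    using sl fs rR by blast
  have item: "sumd_inst (\<lambda>i. \<pi> (xs ! i)) (trm xs ob) = oexp (obsmap \<pi> ob)"
    if "ob \<in> set (sl (\<rho> ?r \<alpha>))" for ob \<alpha>
  proof (cases ob)
    case (Tr p r')
    have "\<rho> ?r \<alpha> (Tr p r') \<noteq> 0" using that slp Tr by auto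
    then have "r' \<in> set xs" using clo rxs by blast
    then show ?thesis using idx[of r' xs] Tr by (simp add: trm_def obsmap_def)
  qed (auto simp: trm_def obsmap_def)
  have hs: "hsharp (\<lambda>i. \<pi> (xs ! i)) (tau \<rho> xs i) = gsum atoms_list (\<lambda>\<alpha>. wsum (lexp (M \<alpha>)))"
    unfolding hsharp_def tau_def M_def lexp_def using i item
    by (simp add: map_map comp_def cong: map_cong)
  have wts: "wt (M \<alpha>) ob = wt (dl star (\<pi> ?r) \<alpha>) ob" for \<alpha> ob
  proof -
    have "wt (M \<alpha>) ob = sum (\<rho> ?r \<alpha>) {x \<in> set (sl (\<rho> ?r \<alpha>)). obsmap \<pi> x = ob}"
      unfolding M_def using slp by (simp add: wt_distinct_map)
    also have "\<dots> = sum (\<rho> ?r \<alpha>) {x. \<rho> ?r \<alpha> x \<noteq> 0 \<and> obsmap \<pi> x = ob}"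
      using slp by simp
    also have "\<dots> = deriv star (\<pi> ?r) \<alpha> ob"
    proof (cases ob)
      case Acc
      have "{x. \<rho> ?r \<alpha> x \<noteq> 0 \<and> obsmap \<pi> x = ob} = {x. \<rho> ?r \<alpha> x \<noteq> 0 \<and> x = Acc}"
        by (auto simp: Acc)
      then show ?thesis using hom rR by (simp add: sum_single sum_single2 is_hom_def Acc)
    next
      case Rej
      have "{x. \<rho> ?r \<alpha> x \<noteq> 0 \<and> obsmap \<pi> x = ob} = {x. \<rho> ?r \<alpha> x \<noteq> 0 \<and> x = Rej}"
        by (auto simp: Rej)
      then show ?thesis using hom rR by (simp add: sum_single sum_single2 is_hom_def Rej)
    next
      case (Out v)
      have "{x. \<rho> ?r \<alpha> x \<noteq> 0 \<and> obsmap \<pi> x = ob} = {x. \<rho> ?r \<alpha> x \<noteq> 0 \<and> x = Out v}"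
        by (auto simp: Out)
      then show ?thesis using hom rR by (simp add: sum_single sum_single2 is_hom_def Out)
    next
      case (Tr p y)
      have "{x. \<rho> ?r \<alpha> x \<noteq> 0 \<and> obsmap \<pi> x = ob} = {x \<in> {Tr p x' | x'. x' \<in> R \<and> \<pi> x' = y}. \<rho> ?r \<alpha> x \<noteq> 0}"
        using inR[OF rR] by (auto simp: Tr)
      then show ?thesis using hom rR by (simp add: is_hom_def msum_def Tr)
    qed
    also have "\<dots> = wt (dl star (\<pi> ?r) \<alpha>) ob" by (simp add: sem_FT)
    finally show ?thesis .
  qed
  have "eqv star (\<pi> ?r) (gsum atoms_list (\<lambda>\<alpha>. wsum (lexp (dl star (\<pi> ?r) \<alpha>))))" by (rule FT)
  also have "eqv star \<dots> (gsum atoms_list (\<lambda>\<alpha>. wsum (lexp (M \<alpha>))))"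
    by (rule gsum_cong_guarded, intro ballI cSr WF wt_lexp_eq, simp add: wts)
  finally show ?thesis using hs by simp
qed

end

theorem mainTheorem11:
  fixes star :: "'s::wsemiring \<Rightarrow> 's"
    and e f :: "('t::finite, 'p, 'v, 's) exp"
  assumes "positive_sr TYPE('s)"
    and "refinement_sr TYPE('s)"
    and "conway_sr star"
    and "bisimilar star e f"
  shows "deqv star e f"
proof -
  note pos = assms(1)
  from assms(4) obtain R where bis: "is_bisim star R" and ef: "(e, f) \<in> R"
    unfolding bisimilar_def by blast
  from bis obtain \<rho> where
    props: "\<forall>r\<in>R. \<forall>\<alpha>. fin_supp (\<rho> r \<alpha>) \<and> (\<forall>p r'. \<rho> r \<alpha> (Tr p r') \<noteq> 0 \<longrightarrow> r' \<in> R)"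
    and h1: "is_hom R \<rho> (deriv star) fst" and h2: "is_hom R \<rho> (deriv star) snd"
    unfolding is_bisim_def by blast
  have fs: "\<And>r \<alpha>. r \<in> R \<Longrightarrow> fin_supp (\<rho> r \<alpha>)" using props by blast
  have inR: "\<And>r \<alpha> p r'. r \<in> R \<Longrightarrow> \<rho> r \<alpha> (Tr p r') \<noteq> 0 \<Longrightarrow> r' \<in> R" using props by blast
  define R0 where "R0 = R \<inter> (cl e \<times> cl f)"
  have "finite R0" unfolding R0_def using cl_finite[of e] cl_finite[of f] by auto
  then obtain xs where dxs: "distinct xs" and sxs: "set xs = R0"
    using finite_distinct_list by blast
  have sub: "set xs \<subseteq> R" using sxs R0_def by auto
  have clo: "r' \<in> set xs" if r: "r \<in> set xs" and nz: "\<rho> r \<alpha> (Tr p r') \<noteq> 0" for r \<alpha> p r'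
  proof -
    have rR: "r \<in> R" and rc: "fst r \<in> cl e" "snd r \<in> cl f" using r sxs R0_def by auto
    have r'R: "r' \<in> R" using inR[OF rR nz] .
    have "msum (\<rho> r \<alpha>) {Tr p x' | x'. x' \<in> R \<and> fst x' = fst r'} \<noteq> 0"
      by (rule msum_nz[OF pos fs[OF rR] _ nz]) (use r'R in blast)
    then have "deriv star (fst r) \<alpha> (Tr p (fst r')) \<noteq> 0" using h1 rR by (simp add: is_hom_def)
    from deriv_tr[OF this] obtain w where "(w, Tr p (fst r')) \<in> set (dl star (fst r) \<alpha>)" by blast
    then have c1: "fst r' \<in> cl e" by (rule cl_closed[OF rc(1)])
    have "msum (\<rho> r \<alpha>) {Tr p x' | x'. x' \<in> R \<and> snd x' = snd r'} \<noteq> 0"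
      by (rule msum_nz[OF pos fs[OF rR] _ nz]) (use r'R in blast)
    then have "deriv star (snd r) \<alpha> (Tr p (snd r')) \<noteq> 0" using h2 rR by (simp add: is_hom_def)
    from deriv_tr[OF this] obtain w where "(w, Tr p (snd r')) \<in> set (dl star (snd r) \<alpha>)" by blast
    then have c2: "snd r' \<in> cl f" by (rule cl_closed[OF rc(2)])
    show ?thesis using r'R c1 c2 sxs R0_def by (cases r') auto
  qed
  have efx: "(e, f) \<in> set xs" using ef sxs R0_def cl_self[of e] cl_self[of f] by auto
  define i0 where "i0 = idx xs (e, f)"
  have i0: "i0 < length xs" "xs ! i0 = (e, f)" using idx[OF efx] i0_def by auto
  have sys: "is_system {..<length xs} (tau \<rho> xs)"
    unfolding is_system_def
  proof (intro conjI ballI allI impI)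
    fix x \<alpha> r g y
    assume x: "x \<in> {..<length xs}" and m: "(r, SVar g y) \<in> set (tau \<rho> xs x \<alpha>)"
    have xR: "xs ! x \<in> R" using x sub by auto
    from m x obtain ob where ob: "ob \<in> set (sl (\<rho> (xs ! x) \<alpha>))" and t: "trm xs ob = SVar g y"
      by (auto simp: tau_def)
    obtain p r' where obt: "ob = Tr p r'" and yy: "y = idx xs r'"
      using t by (cases ob) (auto simp: trm_def)
    have "\<rho> (xs ! x) \<alpha> (Tr p r') \<noteq> 0" using ob obt sl[OF fs[OF xR]] by auto
    moreover have "xs ! x \<in> set xs" using x by simp
    ultimately have "r' \<in> set xs" using clo by blast
    then show "y \<in> {..<length xs}" using idx[of r' xs] yy by auto
  qed simp
  have sal: "salomaa {..<length xs} (tau \<rho> xs)"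
    unfolding salomaa_def
  proof (intro ballI allI impI)
    fix x \<alpha> r g y \<beta>
    assume x: "x \<in> {..<length xs}" and m: "(r, SVar g y) \<in> set (tau \<rho> xs x \<alpha>)"
    from m x obtain ob where t: "trm xs ob = SVar g y"
      by (auto simp: tau_def)
    then obtain p where "g = Act p" by (cases ob) (auto simp: trm_def)
    then show "Eo g \<beta> = 0" by simp
  qed
  have s1: "\<forall>x. x \<in> {..<length xs} \<longrightarrow> deqv star (fst (xs ! x)) (hsharp (\<lambda>i. fst (xs ! i)) (tau \<rho> xs x))"
    by (intro allI impI deqv.base solution[OF h1 fs inR clo sub]) auto
  have s2: "\<forall>x. x \<in> {..<length xs} \<longrightarrow> deqv star (snd (xs ! x)) (hsharp (\<lambda>i. snd (xs ! i)) (tau \<rho> xs x))"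
    by (intro allI impI deqv.base solution[OF h2 fs inR clo sub]) auto
  have "deqv star (fst (xs ! i0)) (snd (xs ! i0))"
    by (rule deqv.UA[OF sys sal s1 s2]) (use i0 in simp)
  then show ?thesis using i0 by simp
qed


end
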